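(* Let $Z_1,\dots,Z_n$ be (possibly dependent) random vectors in $\mathbb R^p$ with $Z_i=\Sigma_i^{1/2}X_i$, where $\Sigma_i$ is positive semidefinite and $X_i$ has mean $0$ and covariance $\mathrm I_p$. Assume that for every convex $1$-Lipschitz $f:\mathbb R^p\to\mathbb R$, if $m_{f(X_i)}$ is a median of $f(X_i)$, then $P(|f(X_i)-m_{f(X_i)}|>t)\le2\exp(-c_it^2)$ for all $t>0$, with $c_i>0$. Let $Q_1,\dots,Q_n$ be $p\times p$ positive definite matrices. Then $$\sup_{1\le i\le n}\Big|\sqrt{Z_i^TQ_iZ_i}-\mathbb E\sqrt{Z_i^TQ_iZ_i}\Big|=O_P\Big(\sup_i\sqrt{\|Q_i\Sigma_i/c_i\|_{op}}\sqrt{\log n}\Big).$$ Moreover, when $\sup_i\sqrt{\|Q_i\Sigma_i/c_i\|_{op}}\sqrt{\log n}\to0$, $$\sup_{1\le i\le n}\big|Z_i^TQ_iZ_i-\mathrm{trace}(\Sigma_iQ_i)\big|=O_P\Big(\sup_i\sqrt{\|Q_i\Sigma_i/c_i\|_{op}}\sqrt{\log n}\,\big[\sup_i\sqrt{\mathrm{trace}(\Sigma_iQ_i)}\vee1\big]\Big).$$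
   Context: Asymptotics as $n\to\infty$ (with $p$, $\Sigma_i$, $Q_i$, $c_i$ allowed to depend on $n$). $X=O_P(a)$ means that for every $\delta>0$ there is $K$ with $P(|X|>Ka)<\delta$ for all large $n$. $\|\cdot\|_{op}$ is the operator norm (largest singular value); $a\vee b=\max(a,b)$. *)

theory Defs
  imports "HOL-Probability.Probability"
begin

text \<open>Vectors in R^p are functions nat => real, only coordinates j < p matter;
  p x p matrices are functions nat => nat => real, only entries j,k < p matter.\<close>

definition mat_mult :: "nat \<Rightarrow> (nat \<Rightarrow> nat \<Rightarrow> real) \<Rightarrow> (nat \<Rightarrow> nat \<Rightarrow> real) \<Rightarrow> (nat \<Rightarrow> nat \<Rightarrow> real)" where
  "mat_mult p A B = (\<lambda>j k. \<Sum>l<p. A j l * B l k)"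

definition mat_vec :: "nat \<Rightarrow> (nat \<Rightarrow> nat \<Rightarrow> real) \<Rightarrow> (nat \<Rightarrow> real) \<Rightarrow> (nat \<Rightarrow> real)" where
  "mat_vec p A x = (\<lambda>j. \<Sum>k<p. A j k * x k)"

definition quad_form :: "nat \<Rightarrow> (nat \<Rightarrow> nat \<Rightarrow> real) \<Rightarrow> (nat \<Rightarrow> real) \<Rightarrow> real" where
  "quad_form p A x = (\<Sum>j<p. \<Sum>k<p. x j * A j k * x k)"

definition mat_trace :: "nat \<Rightarrow> (nat \<Rightarrow> nat \<Rightarrow> real) \<Rightarrow> real" where
  "mat_trace p A = (\<Sum>j<p. A j j)"

definition enorm :: "nat \<Rightarrow> (nat \<Rightarrow> real) \<Rightarrow> real" where
  "enorm p x = sqrt (\<Sum>j<p. (x j)\<^sup>2)"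

definition op_norm :: "nat \<Rightarrow> (nat \<Rightarrow> nat \<Rightarrow> real) \<Rightarrow> real" where
  "op_norm p A = Sup {enorm p (mat_vec p A x) | x. enorm p x \<le> 1}"

definition mat_symmetric :: "nat \<Rightarrow> (nat \<Rightarrow> nat \<Rightarrow> real) \<Rightarrow> bool" where
  "mat_symmetric p A \<longleftrightarrow> (\<forall>j<p. \<forall>k<p. A j k = A k j)"

definition pos_semidef :: "nat \<Rightarrow> (nat \<Rightarrow> nat \<Rightarrow> real) \<Rightarrow> bool" where
  "pos_semidef p A \<longleftrightarrow> mat_symmetric p A \<and> (\<forall>x. quad_form p A x \<ge> 0)"

definition pos_def :: "nat \<Rightarrow> (nat \<Rightarrow> nat \<Rightarrow> real) \<Rightarrow> bool" where
  "pos_def p A \<longleftrightarrow> mat_symmetric p A \<and> (\<forall>x. (\<exists>j<p. x j \<noteq> 0) \<longrightarrow> quad_form p A x > 0)"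

text \<open>Convex 1-Lipschitz functions on R^p (w.r.t. the Euclidean norm of the first p coordinates;
  such f depend only on the first p coordinates).\<close>
definition convex_lip1 :: "nat \<Rightarrow> ((nat \<Rightarrow> real) \<Rightarrow> real) \<Rightarrow> bool" where
  "convex_lip1 p f \<longleftrightarrow>
     (\<forall>x y. \<bar>f x - f y\<bar> \<le> enorm p (\<lambda>j. x j - y j)) \<and>
     (\<forall>x y u. 0 \<le> u \<and> u \<le> 1 \<longrightarrow>
        f (\<lambda>j. u * x j + (1 - u) * y j) \<le> u * f x + (1 - u) * f y)"

definition is_median :: "'a measure \<Rightarrow> ('a \<Rightarrow> real) \<Rightarrow> real \<Rightarrow> bool" where
  "is_median M Y m \<longleftrightarrow>
     measure M {\<omega>\<in>space M. Y \<omega> \<le> m} \<ge> 1/2 \<and> measure M {\<omega>\<in>space M. Y \<omega> \<ge> m} \<ge> 1/2"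

definition bigO_P :: "(nat \<Rightarrow> 'a measure) \<Rightarrow> (nat \<Rightarrow> 'a \<Rightarrow> real) \<Rightarrow> (nat \<Rightarrow> real) \<Rightarrow> bool" where
  "bigO_P M Y a \<longleftrightarrow> (\<forall>\<delta>>0. \<exists>K. \<forall>\<^sub>F n in sequentially.
      measure (M n) {\<omega>\<in>space (M n). \<bar>Y n \<omega>\<bar> > K * a n} < \<delta>)"

end

theory Submission
  imports Defs
begin

definition ip :: "nat \<Rightarrow> (nat \<Rightarrow> real) \<Rightarrow> (nat \<Rightarrow> real) \<Rightarrow> real" where
  "ip p x y = (\<Sum>j<p. x j * y j)"

lemma enorm_ge0: "enorm p x \<ge> 0"
  unfolding enorm_def by (simp add: sum_nonneg)

lemma enorm_sq: "(enorm p x)\<^sup>2 = (\<Sum>j<p. (x j)\<^sup>2)"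
  unfolding enorm_def by (simp add: sum_nonneg)

lemma enorm_sq_ip: "(enorm p x)\<^sup>2 = ip p x x"
  unfolding enorm_sq ip_def by (simp add: power2_eq_square)

lemma ip_CS: "\<bar>ip p x y\<bar> \<le> enorm p x * enorm p y"
proof -
  have "(ip p x y)\<^sup>2 \<le> (\<Sum>j<p. (x j)\<^sup>2) * (\<Sum>j<p. (y j)\<^sup>2)"
    unfolding ip_def by (rule Cauchy_Schwarz_ineq_sum)
  also have "\<dots> = (enorm p x * enorm p y)\<^sup>2" by (simp add: enorm_sq power_mult_distrib)
  finally have "\<bar>ip p x y\<bar>\<^sup>2 \<le> (enorm p x * enorm p y)\<^sup>2" by simp
  then show ?thesis by (rule power2_le_imp_le) (simp add: enorm_ge0)
qed

lemma enorm_cong: "(\<And>j. j < p \<Longrightarrow> x j = y j) \<Longrightarrow> enorm p x = enorm p y"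
  unfolding enorm_def by simp

lemma ip_cong: "(\<And>j. j < p \<Longrightarrow> x j = x' j) \<Longrightarrow> (\<And>j. j < p \<Longrightarrow> y j = y' j) \<Longrightarrow> ip p x y = ip p x' y'"
  unfolding ip_def by simp

lemma mat_vec_cong: "(\<And>j. j < p \<Longrightarrow> x j = y j) \<Longrightarrow> mat_vec p A x = mat_vec p A y"
  unfolding mat_vec_def by (intro ext sum.cong) auto

lemma quad_form_ip: "quad_form p A x = ip p x (mat_vec p A x)"
  unfolding quad_form_def ip_def mat_vec_def by (simp add: sum_distrib_left mult.assoc)

lemma quad_form_cong: "(\<And>j. j < p \<Longrightarrow> x j = y j) \<Longrightarrow> quad_form p A x = quad_form p A y"
  unfolding quad_form_def by simp

lemma ip_sym_mat: assumes "mat_symmetric p S"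
  shows "ip p x (mat_vec p S y) = ip p (mat_vec p S x) y"
proof -
  have "ip p x (mat_vec p S y) = (\<Sum>j<p. \<Sum>k<p. x j * S j k * y k)"
    unfolding ip_def mat_vec_def by (simp add: sum_distrib_left mult.assoc)
  also have "\<dots> = (\<Sum>k<p. \<Sum>j<p. x j * S j k * y k)" by (rule sum.swap)
  also have "\<dots> = (\<Sum>k<p. \<Sum>j<p. S k j * x j * y k)"
    using assms unfolding mat_symmetric_def by (intro sum.cong refl) (auto simp: mult.commute)
  also have "\<dots> = ip p (mat_vec p S x) y"
    unfolding ip_def mat_vec_def by (simp add: sum_distrib_right)
  finally show ?thesis .
qed

lemma enorm_zero_coords: assumes "enorm p x = 0" "j < p" shows "x j = 0"
proof -
  have "(\<Sum>j<p. (x j)\<^sup>2) = 0" using assms(1) enorm_sq[of p x] by simp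
  then have "\<forall>j\<in>{..<p}. (x j)\<^sup>2 = 0" by (subst (asm) sum_nonneg_eq_0_iff) auto
  then show ?thesis using assms(2) by auto
qed

lemma mat_vec_scale: "mat_vec p A (\<lambda>k. a * x k) = (\<lambda>j. a * mat_vec p A x j)"
  unfolding mat_vec_def by (simp add: sum_distrib_left mult.left_commute)

lemma enorm_scale: "enorm p (\<lambda>j. a * x j) = \<bar>a\<bar> * enorm p x"
  unfolding enorm_def by (simp add: power_mult_distrib sum_distrib_left[symmetric] real_sqrt_mult)

lemma mat_vec_frob: "(enorm p (mat_vec p A x))\<^sup>2 \<le> (\<Sum>j<p. \<Sum>k<p. (A j k)\<^sup>2) * (enorm p x)\<^sup>2"
proof -
  have "(enorm p (mat_vec p A x))\<^sup>2 = (\<Sum>j<p. (\<Sum>k<p. A j k * x k)\<^sup>2)"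
    unfolding enorm_sq mat_vec_def ..
  also have "\<dots> \<le> (\<Sum>j<p. (\<Sum>k<p. (A j k)\<^sup>2) * (\<Sum>k<p. (x k)\<^sup>2))"
    by (intro sum_mono Cauchy_Schwarz_ineq_sum)
  also have "\<dots> = (\<Sum>j<p. \<Sum>k<p. (A j k)\<^sup>2) * (enorm p x)\<^sup>2"
    by (simp add: enorm_sq sum_distrib_right)
  finally show ?thesis .
qed

lemma op_norm_bdd: "bdd_above {enorm p (mat_vec p A x) | x. enorm p x \<le> 1}"
proof -
  define F where "F = (\<Sum>j<p. \<Sum>k<p. (A j k)\<^sup>2)"
  have F0: "F \<ge> 0" unfolding F_def by (intro sum_nonneg) auto
  show ?thesis
  proof (rule bdd_aboveI)
    fix y assume "y \<in> {enorm p (mat_vec p A x) | x. enorm p x \<le> 1}"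
    then obtain x where y: "y = enorm p (mat_vec p A x)" and x: "enorm p x \<le> 1" by auto
    have "y\<^sup>2 \<le> F * (enorm p x)\<^sup>2" unfolding y F_def by (rule mat_vec_frob)
    also have "\<dots> \<le> F * 1" using x enorm_ge0[of p x] F0
      by (intro mult_left_mono) (auto simp: power_le_one)
    finally have "y\<^sup>2 \<le> (sqrt F)\<^sup>2" using F0 by (simp add: F0)
    then show "y \<le> sqrt F" by (rule power2_le_imp_le) (simp add: F0)
  qed
qed

lemma op_norm_ge0: "op_norm p A \<ge> 0"
proof -
  have "enorm p (mat_vec p A (\<lambda>_. 0)) \<in> {enorm p (mat_vec p A x) | x. enorm p x \<le> 1}"
    by (auto simp: enorm_def)
  then have "enorm p (mat_vec p A (\<lambda>_. 0)) \<le> op_norm p A"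
    unfolding op_norm_def by (rule cSup_upper[OF _ op_norm_bdd])
  then show ?thesis using enorm_ge0 order_trans by blast
qed

lemma op_norm_bound: "enorm p (mat_vec p A x) \<le> op_norm p A * enorm p x"
proof (cases "enorm p x = 0")
  case True
  then have "mat_vec p A x = mat_vec p A (\<lambda>_. 0)"
    by (intro mat_vec_cong) (simp add: enorm_zero_coords)
  then show ?thesis using True by (simp add: mat_vec_def enorm_def)
next
  case False
  then have pos: "enorm p x > 0" using enorm_ge0[of p x] by simp
  define y where "y = (\<lambda>j. (1 / enorm p x) * x j)"
  have "enorm p y = 1" unfolding y_def enorm_scale using pos by simp
  then have "enorm p (mat_vec p A y) \<le> op_norm p A"
    unfolding op_norm_def by (intro cSup_upper[OF _ op_norm_bdd]) auto
  moreover have "enorm p (mat_vec p A y) = enorm p (mat_vec p A x) / enorm p x"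
    unfolding y_def mat_vec_scale enorm_scale using pos by simp
  ultimately show ?thesis using pos by (simp add: divide_le_eq)
qed

lemma ip_sym: "ip p x y = ip p y x"
  unfolding ip_def by (simp add: mult.commute)

lemma ip_le: "ip p x y \<le> enorm p x * enorm p y"
  using ip_CS[of p x y] by linarith

lemma ip_funpow_adj:
  assumes adj: "\<And>x y. ip p x (f y) = ip p (f x) y"
  shows "ip p ((f^^N) x) ((f^^N) y) = ip p x ((f^^(2*N)) y)"
proof (induction N arbitrary: y)
  case 0 then show ?case by simp
next
  case (Suc N)
  have "ip p ((f^^Suc N) x) ((f^^Suc N) y) = ip p (f ((f^^N) x)) ((f^^Suc N) y)" by simp
  also have "\<dots> = ip p ((f^^N) x) (f ((f^^Suc N) y))"
    using adj ip_sym by metis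
  also have "f ((f^^Suc N) y) = (f^^N) ((f^^2) y)"
  proof -
    have "f ((f^^Suc N) y) = (f^^(N + 2)) y" by simp
    also have "\<dots> = (f^^N) ((f^^2) y)" by (simp only: funpow_add o_apply)
    finally show ?thesis .
  qed
  also have "ip p ((f^^N) x) ((f^^N) ((f^^2) y)) = ip p x ((f^^(2*N)) ((f^^2) y))" by (rule Suc.IH)
  also have "(f^^(2*N)) ((f^^2) y) = (f^^(2*N + 2)) y" by (simp only: funpow_add o_apply)
  also have "2*N + 2 = 2 * Suc N" by simp
  finally show ?case .
qed

lemma power_ineq:
  assumes adj: "\<And>x y. ip p x (f y) = ip p (f x) y"
  shows "(enorm p (f x))^(2^m) \<le> (enorm p x)^(2^m - 1) * enorm p ((f^^(2^m)) x)"
proof (induction m)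
  case 0 then show ?case by simp
next
  case (Suc m)
  define N :: nat where "N = 2^m"
  have N1: "N \<ge> 1" unfolding N_def by simp
  have sq: "(enorm p ((f^^N) x))\<^sup>2 \<le> enorm p x * enorm p ((f^^(2*N)) x)"
    using ip_funpow_adj[OF adj, of N x x] ip_le[of p x "(f^^(2*N)) x"] by (simp add: enorm_sq_ip)
  have "(enorm p (f x))^(2^Suc m) = ((enorm p (f x))^N)\<^sup>2"
    unfolding N_def by (simp add: power_mult[symmetric] mult.commute)
  also have "\<dots> \<le> ((enorm p x)^(N - 1) * enorm p ((f^^N) x))\<^sup>2"
    using Suc.IH unfolding N_def by (intro power_mono) (auto simp: enorm_ge0)
  also have "\<dots> = (enorm p x)^(2*(N - 1)) * (enorm p ((f^^N) x))\<^sup>2"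
    by (simp add: power_mult_distrib power_mult[symmetric] mult.commute)
  also have "\<dots> \<le> (enorm p x)^(2*(N - 1)) * (enorm p x * enorm p ((f^^(2*N)) x))"
    by (intro mult_left_mono sq) (simp add: enorm_ge0)
  also have "\<dots> = (enorm p x)^(2^Suc m - 1) * enorm p ((f^^(2^Suc m)) x)"
  proof -
    from N1 obtain k where k: "N = Suc k" by (cases N) auto
    have "(2::nat)^Suc m = 2 * N" unfolding N_def by simp
    then have "2^Suc m - 1 = Suc (2*(N - 1))" using k by simp
    then show ?thesis unfolding N_def by (simp add: algebra_simps)
  qed
  finally show ?case .
qed

lemma pow_pred_mult: "n > 0 \<Longrightarrow> (u::real)^(n - 1) * u = u^n"
  by (cases n) (auto simp: power_Suc2)

lemma power_trick:
  assumes adj: "\<And>x y. ip p x (f y) = ip p (f x) y"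
    and bnd: "\<And>k x. enorm p ((f^^Suc k) x) \<le> C * \<rho>^k * enorm p x"
    and rho: "\<rho> \<ge> 0"
  shows "enorm p (f x) \<le> \<rho> * enorm p x"
proof (rule ccontr)
  assume contra: "\<not> ?thesis"
  define a where "a = enorm p (f x)"
  define u where "u = enorm p x"
  have u0: "u \<ge> 0" unfolding u_def by (rule enorm_ge0)
  have key: "a^(2^m) \<le> C * \<rho>^(2^m - 1) * u^(2^m)" for m
  proof -
    have b: "enorm p ((f^^(2^m)) x) \<le> C * \<rho>^(2^m - 1) * u"
      using bnd[of "2^m - 1" x] unfolding u_def by simp
    have "a^(2^m) \<le> u^(2^m - 1) * enorm p ((f^^(2^m)) x)"
      unfolding a_def u_def by (rule power_ineq[OF adj])
    also have "\<dots> \<le> u^(2^m - 1) * (C * \<rho>^(2^m - 1) * u)"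
      by (intro mult_left_mono b) (simp_all add: u0)
    also have "\<dots> = C * \<rho>^(2^m - 1) * u^(2^m)"
    proof -
      have "u^(2^m - 1) * u = u^(2^m)" by (rule pow_pred_mult) simp
      then show ?thesis by (simp add: algebra_simps)
    qed
    finally show ?thesis .
  qed
  have agt: "a > \<rho> * u" using contra unfolding a_def u_def by simp
  show False
  proof (cases "\<rho> = 0")
    case True
    have "a^2 \<le> 0" using key[of 1] True by simp
    then show False using agt True by (simp add: power2_eq_square) (smt (verit) mult_pos_pos)
  next
    case False
    then have rpos: "\<rho> > 0" using rho by simp
    show False
    proof (cases "u = 0")
      case True
      have "a \<le> 0" using key[of 0] True by simp
      then show False using agt True by simp
    next
      case False
      then have upos: "u > 0" using u0 by simp
      define q where "q = a / (\<rho> * u)"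
      have q1: "q > 1" unfolding q_def using agt rpos upos by simp
      obtain n where n: "C / \<rho> < q^n" using real_arch_pow[OF q1] by blast
      have "q^n \<le> q^(2^n)" using q1 by (intro power_increasing) (simp_all add: less_imp_le)
      have aq: "a = q * (\<rho> * u)" unfolding q_def using rpos upos by simp
      have "(q * (\<rho> * u))^(2^n) \<le> C * \<rho>^(2^n - 1) * u^(2^n)" using key[of n] aq by simp
      then have "q^(2^n) * \<rho>^(2^n) * u^(2^n) \<le> C * \<rho>^(2^n - 1) * u^(2^n)"
        by (simp add: power_mult_distrib mult.assoc)
      then have "q^(2^n) * \<rho>^(2^n) \<le> C * \<rho>^(2^n - 1)" using upos by simp
      moreover have "\<rho>^(2^n) = \<rho>^(2^n - 1) * \<rho>" by (rule pow_pred_mult[symmetric]) simp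
      ultimately have "q^(2^n) * \<rho> \<le> C" using rpos by (simp add: mult.assoc[symmetric])
      then have "q^(2^n) \<le> C / \<rho>" using rpos by (simp add: le_divide_eq)
      then show False using n \<open>q^n \<le> q^(2^n)\<close> by simp
    qed
  qed
qed

definition bf :: "nat \<Rightarrow> (nat \<Rightarrow> nat \<Rightarrow> real) \<Rightarrow> (nat \<Rightarrow> real) \<Rightarrow> (nat \<Rightarrow> real) \<Rightarrow> real" where
  "bf p Q v w = (\<Sum>j<p. \<Sum>k<p. v j * Q j k * w k)"

lemma bf_sym: assumes "mat_symmetric p Q" shows "bf p Q v w = bf p Q w v"
proof -
  have "bf p Q v w = (\<Sum>k<p. \<Sum>j<p. v j * Q j k * w k)" unfolding bf_def by (rule sum.swap)
  also have "\<dots> = bf p Q w v" unfolding bf_def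
    using assms unfolding mat_symmetric_def by (intro sum.cong refl) (auto simp: mult.commute mult.left_commute)
  finally show ?thesis .
qed

lemma quad_expand: assumes "mat_symmetric p Q"
  shows "quad_form p Q (\<lambda>j. a * v j + b * w j)
     = a\<^sup>2 * quad_form p Q v + 2 * a * b * bf p Q v w + b\<^sup>2 * quad_form p Q w"
proof -
  have "quad_form p Q (\<lambda>j. a * v j + b * w j)
     = a\<^sup>2 * quad_form p Q v + a * b * bf p Q v w + a * b * bf p Q w v + b\<^sup>2 * quad_form p Q w"
    unfolding quad_form_def bf_def
    by (simp add: algebra_simps power2_eq_square sum.distrib sum_distrib_left)
  then show ?thesis using bf_sym[OF assms, of w v] by simp
qed

lemma CS_psd: assumes sym: "mat_symmetric p Q" and psd: "\<And>y. quad_form p Q y \<ge> 0"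
  shows "(bf p Q v w)\<^sup>2 \<le> quad_form p Q v * quad_form p Q w"
proof -
  define qv where "qv = quad_form p Q v"
  define qw where "qw = quad_form p Q w"
  define b where "b = bf p Q v w"
  have ineq: "0 \<le> qv + 2 * t * b + t\<^sup>2 * qw" for t
    using psd[of "\<lambda>j. 1 * v j + t * w j"] quad_expand[OF sym, of 1 v t w]
    unfolding qv_def qw_def b_def by simp
  have qw0: "qw \<ge> 0" unfolding qw_def by (rule psd)
  have qv0: "qv \<ge> 0" unfolding qv_def by (rule psd)
  show ?thesis
  proof (cases "qw = 0")
    case True
    have "b = 0"
    proof (rule ccontr)
      assume "b \<noteq> 0"
      have "0 \<le> qv + 2 * (- (qv + 1) / (2 * b)) * b" using ineq[of "- (qv + 1) / (2 * b)"] True by simp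
      also have "\<dots> = -1" using \<open>b \<noteq> 0\<close> by (simp add: field_simps)
      finally show False by simp
    qed
    then show ?thesis using True unfolding qv_def qw_def b_def by simp
  next
    case False
    then have qwp: "qw > 0" using qw0 by simp
    have "0 \<le> qv + 2 * (- b / qw) * b + (- b / qw)\<^sup>2 * qw" by (rule ineq)
    also have "\<dots> = qv - b\<^sup>2 / qw" using qwp by (simp add: field_simps power2_eq_square)
    finally have "b\<^sup>2 / qw \<le> qv" by simp
    then have "b\<^sup>2 \<le> qv * qw" using qwp by (simp add: divide_le_eq)
    then show ?thesis unfolding qv_def qw_def b_def .
  qed
qed

lemma bf_le: assumes sym: "mat_symmetric p Q" and psd: "\<And>y. quad_form p Q y \<ge> 0"
  shows "\<bar>bf p Q v w\<bar> \<le> sqrt (quad_form p Q v) * sqrt (quad_form p Q w)"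
proof -
  have "(bf p Q v w)\<^sup>2 \<le> (sqrt (quad_form p Q v) * sqrt (quad_form p Q w))\<^sup>2"
    using CS_psd[OF sym psd, of v w] psd[of v] psd[of w] by (simp add: power_mult_distrib)
  then have "\<bar>bf p Q v w\<bar>\<^sup>2 \<le> (sqrt (quad_form p Q v) * sqrt (quad_form p Q w))\<^sup>2" by simp
  then show ?thesis by (rule power2_le_imp_le) (intro mult_nonneg_nonneg real_sqrt_ge_zero psd)
qed

lemma hq_convex: assumes sym: "mat_symmetric p Q" and psd: "\<And>y. quad_form p Q y \<ge> 0"
  and a: "a \<ge> 0" and b: "b \<ge> 0"
  shows "sqrt (quad_form p Q (\<lambda>j. a * v j + b * w j))
        \<le> a * sqrt (quad_form p Q v) + b * sqrt (quad_form p Q w)"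
proof -
  define hv where "hv = sqrt (quad_form p Q v)"
  define hw where "hw = sqrt (quad_form p Q w)"
  have hv0: "hv \<ge> 0" and hw0: "hw \<ge> 0" unfolding hv_def hw_def using psd by auto
  have qv: "quad_form p Q v = hv\<^sup>2" unfolding hv_def using psd[of v] by simp
  have qw: "quad_form p Q w = hw\<^sup>2" unfolding hw_def using psd[of w] by simp
  have "bf p Q v w \<le> hv * hw" using bf_le[OF sym psd, of v w] unfolding hv_def hw_def by simp
  then have "2 * a * b * bf p Q v w \<le> 2 * a * b * (hv * hw)" using a b
    by (intro mult_left_mono) auto
  then have "quad_form p Q (\<lambda>j. a * v j + b * w j) \<le> (a * hv + b * hw)\<^sup>2"
    unfolding quad_expand[OF sym] qv qw by (simp add: power2_eq_square algebra_simps)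
  then have "sqrt (quad_form p Q (\<lambda>j. a * v j + b * w j)) \<le> sqrt ((a * hv + b * hw)\<^sup>2)"
    by (rule real_sqrt_le_mono)
  also have "\<dots> = a * hv + b * hw" using a b hv0 hw0 by simp
  finally show ?thesis unfolding hv_def hw_def .
qed

lemma hq_lip: assumes sym: "mat_symmetric p Q" and psd: "\<And>y. quad_form p Q y \<ge> 0"
  shows "\<bar>sqrt (quad_form p Q v) - sqrt (quad_form p Q w)\<bar> \<le> sqrt (quad_form p Q (\<lambda>j. v j - w j))"
proof -
  define hv where "hv = sqrt (quad_form p Q v)"
  define hw where "hw = sqrt (quad_form p Q w)"
  have hv0: "hv \<ge> 0" and hw0: "hw \<ge> 0" unfolding hv_def hw_def using psd by auto
  have qv: "quad_form p Q v = hv\<^sup>2" unfolding hv_def using psd[of v] by simp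
  have qw: "quad_form p Q w = hw\<^sup>2" unfolding hw_def using psd[of w] by simp
  have "bf p Q v w \<le> hv * hw" using bf_le[OF sym psd, of v w] unfolding hv_def hw_def by simp
  moreover have "quad_form p Q (\<lambda>j. v j - w j) = quad_form p Q (\<lambda>j. 1 * v j + (-1) * w j)" by simp
  ultimately have "(hv - hw)\<^sup>2 \<le> quad_form p Q (\<lambda>j. v j - w j)"
    unfolding quad_expand[OF sym] qv qw by (simp add: power2_eq_square algebra_simps)
  then have "sqrt ((hv - hw)\<^sup>2) \<le> sqrt (quad_form p Q (\<lambda>j. v j - w j))"
    by (rule real_sqrt_le_mono)
  then show ?thesis unfolding hv_def hw_def by simp
qed

lemma mat_vec_mult: "mat_vec p (mat_mult p A B) y j = mat_vec p A (mat_vec p B y) j"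
proof -
  have "mat_vec p (mat_mult p A B) y j = (\<Sum>k<p. \<Sum>l<p. A j l * B l k * y k)"
    unfolding mat_vec_def mat_mult_def by (simp add: sum_distrib_right)
  also have "\<dots> = (\<Sum>l<p. \<Sum>k<p. A j l * B l k * y k)" by (rule sum.swap)
  also have "\<dots> = mat_vec p A (mat_vec p B y) j"
    unfolding mat_vec_def by (simp add: sum_distrib_left mult.assoc)
  finally show ?thesis .
qed

lemma quad_opnorm:
  assumes symS: "mat_symmetric p S" and symQ: "mat_symmetric p Q"
    and Sig: "\<forall>j<p. \<forall>k<p. Sig j k = mat_mult p S S j k"
  shows "quad_form p Q (mat_vec p S x) \<le> op_norm p (mat_mult p Q Sig) * (enorm p x)\<^sup>2"
proof -
  define Sv where "Sv = mat_vec p S"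
  define Qv where "Qv = mat_vec p Q"
  define f where "f = Sv \<circ> Qv \<circ> Sv"
  define t where "t = Qv \<circ> Sv \<circ> Sv"
  define \<rho> where "\<rho> = op_norm p (mat_mult p Q Sig)"
  have rho0: "\<rho> \<ge> 0" unfolding \<rho>_def by (rule op_norm_ge0)
  have adj: "ip p x (f y) = ip p (f x) y" for x y
  proof -
    have "ip p x (f y) = ip p (Sv x) (Qv (Sv y))" unfolding f_def Sv_def by (simp add: ip_sym_mat[OF symS])
    also have "\<dots> = ip p (Qv (Sv x)) (Sv y)" unfolding Qv_def by (simp add: ip_sym_mat[OF symQ])
    also have "\<dots> = ip p (f x) y" unfolding f_def Sv_def by (simp add: ip_sym_mat[OF symS])
    finally show ?thesis .
  qed
  have tb: "enorm p (t y) \<le> \<rho> * enorm p y" for y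
  proof -
    have "enorm p (t y) = enorm p (mat_vec p (mat_mult p Q Sig) y)"
    proof (rule enorm_cong)
      fix j assume "j < p"
      have "mat_vec p (mat_mult p Q Sig) y j = mat_vec p Q (mat_vec p Sig y) j" by (rule mat_vec_mult)
      also have e1: "mat_vec p Q (mat_vec p Sig y) = mat_vec p Q (mat_vec p (mat_mult p S S) y)"
        by (rule mat_vec_cong) (use Sig in \<open>auto simp: mat_vec_def intro!: sum.cong\<close>)
      also have e2: "mat_vec p Q (mat_vec p (mat_mult p S S) y) = mat_vec p Q (mat_vec p S (mat_vec p S y))"
        by (rule mat_vec_cong) (simp add: mat_vec_mult)
      finally show "t y j = mat_vec p (mat_mult p Q Sig) y j" unfolding t_def Qv_def Sv_def by simp
    qed
    also have "\<dots> \<le> \<rho> * enorm p y" unfolding \<rho>_def by (rule op_norm_bound)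
    finally show ?thesis .
  qed
  have tk: "enorm p ((t^^k) y) \<le> \<rho>^k * enorm p y" for k y
  proof (induction k)
    case 0 then show ?case by simp
  next
    case (Suc k)
    have "enorm p ((t^^Suc k) y) \<le> \<rho> * enorm p ((t^^k) y)" using tb by simp
    also have "\<dots> \<le> \<rho> * (\<rho>^k * enorm p y)" using Suc.IH rho0 by (intro mult_left_mono)
    finally show ?case by simp
  qed
  have fk: "(f^^Suc k) y = Sv ((t^^k) (Qv (Sv y)))" for k y
  proof (induction k)
    case 0 then show ?case unfolding f_def by simp
  next
    case (Suc k)
    have "(f^^Suc (Suc k)) y = f ((f^^Suc k) y)" by simp
    also have "\<dots> = f (Sv ((t^^k) (Qv (Sv y))))" by (simp only: Suc.IH)
    also have "\<dots> = Sv (Qv (Sv (Sv ((t^^k) (Qv (Sv y))))))" unfolding f_def by simp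
    also have "\<dots> = Sv ((t^^Suc k) (Qv (Sv y)))" unfolding t_def by simp
    finally show ?case .
  qed
  define C where "C = op_norm p S * op_norm p Q * op_norm p S"
  have bnd: "enorm p ((f^^Suc k) y) \<le> C * \<rho>^k * enorm p y" for k y
  proof -
    have "enorm p ((f^^Suc k) y) = enorm p (Sv ((t^^k) (Qv (Sv y))))" by (simp only: fk)
    also have "\<dots> \<le> op_norm p S * enorm p ((t^^k) (Qv (Sv y)))" unfolding Sv_def by (rule op_norm_bound)
    also have "\<dots> \<le> op_norm p S * (\<rho>^k * enorm p (Qv (Sv y)))"
      by (intro mult_left_mono tk op_norm_ge0)
    also have "\<dots> \<le> op_norm p S * (\<rho>^k * (op_norm p Q * enorm p (Sv y)))"
      unfolding Qv_def by (intro mult_left_mono op_norm_bound op_norm_ge0 zero_le_power rho0)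
    also have "\<dots> \<le> op_norm p S * (\<rho>^k * (op_norm p Q * (op_norm p S * enorm p y)))"
      unfolding Sv_def by (intro mult_left_mono op_norm_bound op_norm_ge0 zero_le_power rho0)
    also have "\<dots> = C * \<rho>^k * enorm p y" unfolding C_def by (simp add: algebra_simps)
    finally show ?thesis .
  qed
  have fx: "enorm p (f x) \<le> \<rho> * enorm p x"
    by (rule power_trick[OF adj bnd rho0])
  have "quad_form p Q (mat_vec p S x) = ip p x (f x)"
  proof -
    have "quad_form p Q (Sv x) = ip p (Sv x) (Qv (Sv x))" unfolding Qv_def by (rule quad_form_ip)
    also have "\<dots> = ip p x (f x)" unfolding f_def Sv_def by (simp add: ip_sym_mat[OF symS])
    finally show ?thesis unfolding Sv_def .
  qed
  also have "\<dots> \<le> enorm p x * enorm p (f x)" by (rule ip_le)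
  also have "\<dots> \<le> enorm p x * (\<rho> * enorm p x)" by (intro mult_left_mono fx enorm_ge0)
  also have "\<dots> = \<rho> * (enorm p x)\<^sup>2" by (simp add: power2_eq_square)
  finally show ?thesis unfolding \<rho>_def .
qed

lemma median_exists:
  assumes P: "prob_space P" and Y: "Y \<in> borel_measurable P"
  shows "\<exists>m. is_median P Y m"
proof -
  interpret prob_space P by (rule P)
  define F where "F x = prob {\<omega>\<in>space P. Y \<omega> \<le> x}" for x
  have sets_le[measurable]: "{\<omega>\<in>space P. Y \<omega> \<le> x} \<in> sets P" for x using Y by measurable
  have sets_lt[measurable]: "{\<omega>\<in>space P. Y \<omega> < x} \<in> sets P" for x using Y by measurable
  have Fmono: "x \<le> y \<Longrightarrow> F x \<le> F y" for x y
    unfolding F_def by (intro finite_measure_mono) auto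
  have lim_top: "(\<lambda>k. F (real k)) \<longlonglongrightarrow> 1"
  proof -
    have "(\<lambda>k. prob {\<omega>\<in>space P. Y \<omega> \<le> real k}) \<longlonglongrightarrow> prob (\<Union>k. {\<omega>\<in>space P. Y \<omega> \<le> real k})"
      by (intro finite_Lim_measure_incseq) (auto simp: incseq_def intro: order_trans)
    moreover have "(\<Union>k. {\<omega>\<in>space P. Y \<omega> \<le> real k}) = space P"
      by (auto intro: real_nat_ceiling_ge)
    ultimately show ?thesis unfolding F_def by (simp add: prob_space)
  qed
  have lim_bot: "(\<lambda>k. F (- real k)) \<longlonglongrightarrow> 0"
  proof -
    have "(\<lambda>k. prob {\<omega>\<in>space P. Y \<omega> \<le> - real k}) \<longlonglongrightarrow> prob (\<Inter>k. {\<omega>\<in>space P. Y \<omega> \<le> - real k})"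
      by (intro finite_Lim_measure_decseq) (auto simp: decseq_def intro: order_trans)
    moreover have "(\<Inter>k. {\<omega>\<in>space P. Y \<omega> \<le> - real k}) = {}"
    proof -
      have "\<exists>k. \<not> Y \<omega> \<le> - real k" for \<omega>
      proof -
        obtain k :: nat where "- Y \<omega> < real k" using reals_Archimedean2 by blast
        then show ?thesis by (intro exI[of _ k]) simp
      qed
      then show ?thesis by auto
    qed
    ultimately show ?thesis unfolding F_def by simp
  qed
  define A where "A = {x. F x \<ge> 1/2}"
  obtain k1 where k1: "F (real k1) > 1/2"
  proof -
    have "\<forall>\<^sub>F k in sequentially. F (real k) > 1/2"
      using lim_top by (rule order_tendstoD) simp
    then show ?thesis using that by (auto simp: eventually_sequentially)
  qed
  obtain k2 where k2: "F (- real k2) < 1/2"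
  proof -
    have "\<forall>\<^sub>F k in sequentially. F (- real k) < 1/2"
      using lim_bot by (rule order_tendstoD) simp
    then show ?thesis using that by (auto simp: eventually_sequentially)
  qed
  have "real k1 \<in> A" using k1 unfolding A_def by simp
  then have Ane: "A \<noteq> {}" by auto
  have Abdd: "bdd_below A"
  proof (rule bdd_belowI)
    fix x assume "x \<in> A"
    then have "F x \<ge> 1/2" unfolding A_def by simp
    show "- real k2 \<le> x"
    proof (rule ccontr)
      assume "\<not> - real k2 \<le> x"
      then have "F x \<le> F (- real k2)" by (intro Fmono) simp
      then show False using k2 \<open>F x \<ge> 1/2\<close> by simp
    qed
  qed
  define m where "m = Inf A"
  have Fm: "F m \<ge> 1/2"
  proof -
    have "(\<lambda>i. prob {\<omega>\<in>space P. Y \<omega> \<le> m + 1 / real (Suc i)}) \<longlonglongrightarrow>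
          prob (\<Inter>i. {\<omega>\<in>space P. Y \<omega> \<le> m + 1 / real (Suc i)})"
    proof (intro finite_Lim_measure_decseq)
      show "decseq (\<lambda>i. {\<omega> \<in> space P. Y \<omega> \<le> m + 1 / real (Suc i)})"
        unfolding decseq_def
      proof (intro allI impI subsetI)
        fix i j \<omega> assume ij: "i \<le> j" and w: "\<omega> \<in> {\<omega> \<in> space P. Y \<omega> \<le> m + 1 / real (Suc j)}"
        have "1 / real (Suc j) \<le> 1 / real (Suc i)" using ij by (simp add: frac_le)
        then show "\<omega> \<in> {\<omega> \<in> space P. Y \<omega> \<le> m + 1 / real (Suc i)}" using w by auto
      qed
    qed auto
    moreover have "(\<Inter>i. {\<omega>\<in>space P. Y \<omega> \<le> m + 1 / real (Suc i)}) = {\<omega>\<in>space P. Y \<omega> \<le> m}"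
    proof (safe)
      fix \<omega> assume w: "\<omega> \<in> (\<Inter>i. {\<omega>\<in>space P. Y \<omega> \<le> m + 1 / real (Suc i)})"
      show "Y \<omega> \<le> m"
      proof (rule ccontr)
        assume "\<not> Y \<omega> \<le> m"
        then have "Y \<omega> - m > 0" by simp
        from reals_Archimedean[OF this] obtain i where "inverse (real (Suc i)) < Y \<omega> - m" by blast
        then have "1 / real (Suc i) < Y \<omega> - m" by (simp add: inverse_eq_divide)
        moreover have "Y \<omega> \<le> m + 1 / real (Suc i)" using w by blast
        ultimately show False by linarith
      qed
    next
      fix \<omega> i assume "\<omega> \<in> space P" "Y \<omega> \<le> m"
      moreover have "0 \<le> 1 / real (Suc i)" by simp
      ultimately show "Y \<omega> \<le> m + 1 / real (Suc i)" by linarith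
    qed (auto)
    ultimately have lim: "(\<lambda>i. F (m + 1 / real (Suc i))) \<longlonglongrightarrow> F m" unfolding F_def by simp
    have "1/2 \<le> F (m + 1 / real (Suc i))" for i
    proof -
      have "Inf A < m + 1 / real (Suc i)" unfolding m_def by simp
      then obtain a where "a \<in> A" "a < m + 1 / real (Suc i)" using cInf_lessD[OF Ane] by blast
      then show ?thesis unfolding A_def using Fmono[of a "m + 1 / real (Suc i)"] by simp
    qed
    then show ?thesis by (intro LIMSEQ_le_const[OF lim]) auto
  qed
  have Plt: "prob {\<omega>\<in>space P. Y \<omega> < m} \<le> 1/2"
  proof -
    have "(\<lambda>i. prob {\<omega>\<in>space P. Y \<omega> \<le> m - 1 / real (Suc i)}) \<longlonglongrightarrow>
          prob (\<Union>i. {\<omega>\<in>space P. Y \<omega> \<le> m - 1 / real (Suc i)})"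
    proof (intro finite_Lim_measure_incseq)
      show "incseq (\<lambda>i. {\<omega> \<in> space P. Y \<omega> \<le> m - 1 / real (Suc i)})"
        unfolding incseq_def
      proof (intro allI impI subsetI)
        fix i j \<omega> assume ij: "i \<le> j" and w: "\<omega> \<in> {\<omega> \<in> space P. Y \<omega> \<le> m - 1 / real (Suc i)}"
        have "1 / real (Suc j) \<le> 1 / real (Suc i)" using ij by (simp add: frac_le)
        then show "\<omega> \<in> {\<omega> \<in> space P. Y \<omega> \<le> m - 1 / real (Suc j)}" using w by auto
      qed
    qed auto
    moreover have "(\<Union>i. {\<omega>\<in>space P. Y \<omega> \<le> m - 1 / real (Suc i)}) = {\<omega>\<in>space P. Y \<omega> < m}"
    proof (safe)
      fix \<omega> assume "\<omega> \<in> space P" "Y \<omega> < m"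
      then have "m - Y \<omega> > 0" by simp
      from reals_Archimedean[OF this] obtain i where "inverse (real (Suc i)) < m - Y \<omega>" by blast
      then have "1 / real (Suc i) < m - Y \<omega>" by (simp add: inverse_eq_divide)
      then have "Y \<omega> \<le> m - 1 / real (Suc i)" by linarith
      then show "\<omega> \<in> (\<Union>i. {\<omega>\<in>space P. Y \<omega> \<le> m - 1 / real (Suc i)})" using \<open>\<omega> \<in> space P\<close> by blast
    next
      fix \<omega> i assume "\<omega> \<in> space P" "Y \<omega> \<le> m - 1 / real (Suc i)"
      moreover have "1 / real (Suc i) > 0" by simp
      ultimately show "Y \<omega> < m" by linarith
    qed
    ultimately have lim: "(\<lambda>i. prob {\<omega>\<in>space P. Y \<omega> \<le> m - 1 / real (Suc i)}) \<longlonglongrightarrow> prob {\<omega>\<in>space P. Y \<omega> < m}"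
      by simp
    have "prob {\<omega>\<in>space P. Y \<omega> \<le> m - 1 / real (Suc i)} \<le> 1/2" for i
    proof -
      have "m - 1 / real (Suc i) \<notin> A"
      proof
        assume "m - 1 / real (Suc i) \<in> A"
        then have "m \<le> m - 1 / real (Suc i)" unfolding m_def by (rule cInf_lower[OF _ Abdd])
        then show False by simp
      qed
      then show ?thesis unfolding A_def F_def by simp
    qed
    then show ?thesis by (intro LIMSEQ_le_const2[OF lim]) auto
  qed
  have "prob {\<omega>\<in>space P. Y \<omega> \<ge> m} = prob (space P - {\<omega>\<in>space P. Y \<omega> < m})"
    by (intro arg_cong[where f=prob]) auto
  also have "\<dots> = 1 - prob {\<omega>\<in>space P. Y \<omega> < m}" by (rule prob_compl) simp
  finally have "prob {\<omega>\<in>space P. Y \<omega> \<ge> m} \<ge> 1/2" using Plt by simp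
  then show ?thesis using Fm unfolding is_median_def F_def by auto
qed

lemma ennreal_layer:
  assumes x: "0 \<le> x"
  shows "ennreal x \<le> 1 + (\<Sum>k. if real (Suc k) < x then 1 else 0 :: ennreal)"
proof (cases "x \<le> 1")
  case True
  then have "ennreal x \<le> 1" by (simp add: ennreal_le_1)
  also have "(1::ennreal) \<le> 1 + (\<Sum>k. if real (Suc k) < x then 1 else 0 :: ennreal)" by simp
  finally show ?thesis .
next
  case False
  have c1: "\<lceil>x\<rceil> \<ge> 1" using False by linarith
  obtain N :: nat where NN0: "\<lceil>x\<rceil> - 1 = int N" by (metis c1 diff_ge_0_iff_ge zero_le_imp_eq_int)
  have NN: "real N = real_of_int \<lceil>x\<rceil> - 1" using arg_cong[OF NN0, of real_of_int] by simp
  have xN: "x \<le> 1 + real N" using NN by linarith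
  have lt: "real (Suc k) < x" if "k < N" for k
  proof -
    have "real (Suc k) \<le> real N" using that by simp
    also have "\<dots> < x" using NN by linarith
    finally show ?thesis .
  qed
  have "ennreal x \<le> ennreal (1 + real N)" using xN by (rule ennreal_leI)
  also have "\<dots> = 1 + of_nat N" using ennreal_of_nat_eq_real_of_nat by (simp add: ennreal_plus[symmetric])
  also have "(of_nat N :: ennreal) = (\<Sum>k<N. if real (Suc k) < x then 1 else 0 :: ennreal)"
    using lt by simp
  also have "(\<Sum>k<N. if real (Suc k) < x then 1 else 0 :: ennreal) \<le> (\<Sum>k. if real (Suc k) < x then 1 else 0 :: ennreal)"
    by (intro sum_le_suminf) auto
  finally show ?thesis by (simp add: add_left_mono)
qed

lemma tail_sq:
  assumes P: "prob_space P" and W[measurable]: "W \<in> borel_measurable P"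
    and W0: "\<And>\<omega>. \<omega> \<in> space P \<Longrightarrow> W \<omega> \<ge> 0" and r: "r > 0"
    and tail: "\<And>s. s > 0 \<Longrightarrow> measure P {\<omega>\<in>space P. W \<omega> > s} \<le> 2 * exp (- (s\<^sup>2 / r\<^sup>2))"
    and int: "integrable P (\<lambda>\<omega>. (W \<omega>)\<^sup>2)"
  shows "integral\<^sup>L P (\<lambda>\<omega>. (W \<omega>)\<^sup>2) \<le> 3 * r\<^sup>2"
proof -
  interpret prob_space P by (rule P)
  define E where "E k = {\<omega>\<in>space P. real (Suc k) < (W \<omega>)\<^sup>2 / r\<^sup>2}" for k
  have E_sets[measurable]: "E k \<in> sets P" for k unfolding E_def by measurable
  have Ek: "prob (E k) \<le> 2 * exp (- real (Suc k))" for k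
  proof -
    define s where "s = sqrt (real (Suc k)) * r"
    have s0: "s > 0" unfolding s_def using r by simp
    have ss: "s\<^sup>2 / r\<^sup>2 = real (Suc k)" unfolding s_def using r by (simp add: power_mult_distrib)
    have "E k \<subseteq> {\<omega>\<in>space P. W \<omega> > s}"
    proof
      fix \<omega> assume "\<omega> \<in> E k"
      then have w: "\<omega> \<in> space P" and lt: "s\<^sup>2 / r\<^sup>2 < (W \<omega>)\<^sup>2 / r\<^sup>2" unfolding E_def ss by auto
      then have "s\<^sup>2 < (W \<omega>)\<^sup>2" using r by (auto simp: divide_less_cancel)
      then have "s < W \<omega>" using W0[OF w] by (rule power2_less_imp_less)
      then show "\<omega> \<in> {\<omega>\<in>space P. W \<omega> > s}" using w by simp
    qed
    then have "prob (E k) \<le> prob {\<omega>\<in>space P. W \<omega> > s}" by (intro finite_measure_mono) auto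
    also have "\<dots> \<le> 2 * exp (- (s\<^sup>2 / r\<^sup>2))" by (rule tail[OF s0])
    finally show ?thesis unfolding ss .
  qed
  define c where "c = exp (- 1::real)"
  have c0: "0 < c" unfolding c_def by simp
  have c_half: "c \<le> 1/2"
  proof -
    have "2 \<le> exp (1::real)" using exp_ge_add_one_self[of 1] by simp
    then show ?thesis unfolding c_def by (simp add: exp_minus field_simps)
  qed
  have sums: "(\<lambda>k. 2 * exp (- real (Suc k))) sums (2 * c * (1 / (1 - c)))"
  proof -
    have "(\<lambda>k. c^k) sums (1 / (1 - c))" using c0 c_half by (intro geometric_sums) simp
    then have "(\<lambda>k. 2 * c * c^k) sums (2 * c * (1 / (1 - c)))" by (rule sums_mult)
    moreover have "2 * c * c^k = 2 * exp (- real (Suc k))" for k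
    proof -
      have "c * c^k = c^(Suc k)" by simp
      also have "\<dots> = exp (real (Suc k) * (-1))" unfolding c_def by (rule exp_of_nat_mult[symmetric])
      finally show ?thesis by simp
    qed
    ultimately show ?thesis by simp
  qed
  have sumle: "2 * c * (1 / (1 - c)) \<le> 2" using c0 c_half by (simp add: field_simps)
  have pw: "ennreal ((W \<omega>)\<^sup>2 / r\<^sup>2) \<le> 1 + (\<Sum>k. indicator (E k) \<omega>)" if w: "\<omega> \<in> space P" for \<omega>
  proof -
    have "ennreal ((W \<omega>)\<^sup>2 / r\<^sup>2) \<le> 1 + (\<Sum>k. if real (Suc k) < (W \<omega>)\<^sup>2 / r\<^sup>2 then 1 else 0 :: ennreal)"
      by (rule ennreal_layer) simp
    also have "(\<lambda>k. if real (Suc k) < (W \<omega>)\<^sup>2 / r\<^sup>2 then 1 else 0 :: ennreal) = (\<lambda>k. indicator (E k) \<omega>)"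
      using w unfolding E_def by (auto simp: indicator_def)
    finally show ?thesis .
  qed
  have "(\<integral>\<^sup>+\<omega>. ennreal ((W \<omega>)\<^sup>2 / r\<^sup>2) \<partial>P) \<le> (\<integral>\<^sup>+\<omega>. (1 + (\<Sum>k. indicator (E k) \<omega>)) \<partial>P)"
    by (intro nn_integral_mono pw)
  also have "\<dots> = (\<integral>\<^sup>+\<omega>. 1 \<partial>P) + (\<integral>\<^sup>+\<omega>. (\<Sum>k. indicator (E k) \<omega>) \<partial>P)"
    by (intro nn_integral_add) auto
  also have "(\<integral>\<^sup>+\<omega>. (\<Sum>k. indicator (E k) \<omega>) \<partial>P) = (\<Sum>k. \<integral>\<^sup>+\<omega>. indicator (E k) \<omega> \<partial>P)"
    by (intro nn_integral_suminf) auto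
  also have "\<dots> = (\<Sum>k. ennreal (prob (E k)))" by (simp add: emeasure_eq_measure)
  also have "\<dots> \<le> (\<Sum>k. ennreal (2 * exp (- real (Suc k))))"
    by (intro suminf_le ennreal_leI Ek) auto
  also have "\<dots> = ennreal (2 * c * (1 / (1 - c)))" by (intro suminf_ennreal_eq sums) simp
  also have "(\<integral>\<^sup>+\<omega>. 1 \<partial>P) = 1" by (simp add: emeasure_space_1)
  finally have "(\<integral>\<^sup>+\<omega>. ennreal ((W \<omega>)\<^sup>2 / r\<^sup>2) \<partial>P) \<le> 1 + ennreal (2 * c * (1 / (1 - c)))" by simp
  also have "\<dots> \<le> ennreal 3"
  proof -
    have "1 + ennreal (2 * c * (1 / (1 - c))) = ennreal (1 + 2 * c * (1 / (1 - c)))"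
      using c0 c_half by (subst ennreal_plus) auto
    also have "\<dots> \<le> ennreal 3" using sumle by (intro ennreal_leI) simp
    finally show ?thesis .
  qed
  also have "(\<integral>\<^sup>+\<omega>. ennreal ((W \<omega>)\<^sup>2 / r\<^sup>2) \<partial>P) = ennreal (integral\<^sup>L P (\<lambda>\<omega>. (W \<omega>)\<^sup>2 / r\<^sup>2))"
    by (intro nn_integral_eq_integral integrable_divide int) auto
  finally have "ennreal (integral\<^sup>L P (\<lambda>\<omega>. (W \<omega>)\<^sup>2 / r\<^sup>2)) \<le> ennreal 3" .
  then have "integral\<^sup>L P (\<lambda>\<omega>. (W \<omega>)\<^sup>2 / r\<^sup>2) \<le> 3" by (metis ennreal_le_iff zero_le_numeral)
  then have "integral\<^sup>L P (\<lambda>\<omega>. (W \<omega>)\<^sup>2) / r\<^sup>2 \<le> 3" by simp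
  then show ?thesis using r by (simp add: divide_le_eq)
qed

lemma quad_expand_S:
  "quad_form p Q (mat_vec p S x) = (\<Sum>a<p. \<Sum>b<p. x a * x b * (\<Sum>j<p. \<Sum>k<p. S j a * Q j k * S k b))"
proof -
  have "quad_form p Q (mat_vec p S x) = (\<Sum>j<p. \<Sum>k<p. \<Sum>a<p. \<Sum>b<p. x a * x b * (S j a * Q j k * S k b))"
    unfolding quad_form_def mat_vec_def
    by (simp add: sum_distrib_left sum_distrib_right mult_ac)
  also have "\<dots> = (\<Sum>j<p. \<Sum>a<p. \<Sum>k<p. \<Sum>b<p. x a * x b * (S j a * Q j k * S k b))"
    by (intro sum.cong refl sum.swap)
  also have "\<dots> = (\<Sum>a<p. \<Sum>j<p. \<Sum>k<p. \<Sum>b<p. x a * x b * (S j a * Q j k * S k b))"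
    by (rule sum.swap)
  also have "\<dots> = (\<Sum>a<p. \<Sum>j<p. \<Sum>b<p. \<Sum>k<p. x a * x b * (S j a * Q j k * S k b))"
    by (intro sum.cong refl sum.swap)
  also have "\<dots> = (\<Sum>a<p. \<Sum>b<p. \<Sum>j<p. \<Sum>k<p. x a * x b * (S j a * Q j k * S k b))"
    by (intro sum.cong refl sum.swap)
  also have "\<dots> = (\<Sum>a<p. \<Sum>b<p. x a * x b * (\<Sum>j<p. \<Sum>k<p. S j a * Q j k * S k b))"
    by (simp add: sum_distrib_left)
  finally show ?thesis .
qed

lemma trace_expand:
  assumes symS: "mat_symmetric p S" and Sig: "\<forall>j<p. \<forall>k<p. Sig j k = mat_mult p S S j k"
  shows "(\<Sum>a<p. \<Sum>j<p. \<Sum>k<p. S j a * Q j k * S k a) = mat_trace p (mat_mult p Sig Q)"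
proof -
  have "mat_trace p (mat_mult p Sig Q) = (\<Sum>k<p. \<Sum>j<p. (\<Sum>a<p. S k a * S a j) * Q j k)"
    unfolding mat_trace_def mat_mult_def using Sig by (simp add: mat_mult_def)
  also have "\<dots> = (\<Sum>k<p. \<Sum>j<p. \<Sum>a<p. S j a * Q j k * S k a)"
    using symS unfolding mat_symmetric_def
    by (intro sum.cong refl) (simp add: sum_distrib_right sum_distrib_left mult_ac)
  also have "\<dots> = (\<Sum>j<p. \<Sum>k<p. \<Sum>a<p. S j a * Q j k * S k a)" by (rule sum.swap)
  also have "\<dots> = (\<Sum>j<p. \<Sum>a<p. \<Sum>k<p. S j a * Q j k * S k a)" by (intro sum.cong refl sum.swap)
  also have "\<dots> = (\<Sum>a<p. \<Sum>j<p. \<Sum>k<p. S j a * Q j k * S k a)" by (rule sum.swap)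
  finally show ?thesis by simp
qed

lemma mat_vec_lin: "mat_vec p S (\<lambda>j. a * x j + b * y j) = (\<lambda>j. a * mat_vec p S x j + b * mat_vec p S y j)"
  unfolding mat_vec_def by (simp add: sum.distrib sum_distrib_left algebra_simps)

lemma mat_vec_diff: "mat_vec p S (\<lambda>j. x j - y j) = (\<lambda>j. mat_vec p S x j - mat_vec p S y j)"
  unfolding mat_vec_def by (simp add: sum_subtractf algebra_simps)

lemma psd_from_pd: assumes "pos_def p Q" shows "quad_form p Q v \<ge> 0"
proof (cases "\<exists>j<p. v j \<noteq> 0")
  case True then show ?thesis using assms unfolding pos_def_def by (simp add: less_imp_le)
next
  case False then show ?thesis unfolding quad_form_def by simp
qed

lemma abs_le_1_plus_sq: "\<bar>y::real\<bar> \<le> 1 + y\<^sup>2"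
proof -
  have "0 \<le> (\<bar>y\<bar> - 1)\<^sup>2" by simp
  then have "2 * \<bar>y\<bar> \<le> \<bar>y\<bar>\<^sup>2 + 1" by (simp add: power2_eq_square algebra_simps)
  moreover have "\<bar>y\<bar>\<^sup>2 = y\<^sup>2" by simp
  moreover have "0 \<le> y\<^sup>2" by simp
  ultimately show ?thesis by linarith
qed

lemma single:
  fixes P :: "'a measure" and X :: "nat \<Rightarrow> 'a \<Rightarrow> real" and S Sig Q :: "nat \<Rightarrow> nat \<Rightarrow> real"
    and Y :: "'a \<Rightarrow> real" and r tr c :: real
  assumes P: "prob_space P"
    and meas: "\<And>j. j < p \<Longrightarrow> X j \<in> borel_measurable P"
    and int2: "\<And>j k. j < p \<Longrightarrow> k < p \<Longrightarrow> integrable P (\<lambda>\<omega>. X j \<omega> * X k \<omega>)"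
    and cov: "\<And>j k. j < p \<Longrightarrow> k < p \<Longrightarrow> integral\<^sup>L P (\<lambda>\<omega>. X j \<omega> * X k \<omega>) = (if j = k then 1 else 0)"
    and psdS: "pos_semidef p S"
    and Sig: "\<forall>j<p. \<forall>k<p. Sig j k = mat_mult p S S j k"
    and cpos: "c > 0"
    and conc: "\<And>f m t. convex_lip1 p f \<Longrightarrow> is_median P (\<lambda>\<omega>. f (\<lambda>j. X j \<omega>)) m \<Longrightarrow> t > 0 \<Longrightarrow>
                 measure P {\<omega>\<in>space P. \<bar>f (\<lambda>j. X j \<omega>) - m\<bar> > t} \<le> 2 * exp (- c * t\<^sup>2)"
    and Qpd: "pos_def p Q"
    and Y_def: "Y = (\<lambda>\<omega>. sqrt (quad_form p Q (mat_vec p S (\<lambda>j. X j \<omega>))))"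
    and r_def: "r = sqrt (op_norm p (\<lambda>j k. mat_mult p Q Sig j k / c))"
    and tr_def: "tr = mat_trace p (mat_mult p Sig Q)"
  shows "Y \<in> borel_measurable P \<and> integrable P Y \<and> r \<ge> 0
     \<and> (r = 0 \<longrightarrow> (\<forall>\<omega>. Y \<omega> = 0))
     \<and> (\<exists>m. \<bar>integral\<^sup>L P Y - m\<bar> \<le> 2 * r
          \<and> (r > 0 \<longrightarrow> (\<forall>s>0. measure P {\<omega>\<in>space P. \<bar>Y \<omega> - m\<bar> > s} \<le> 2 * exp (- (s\<^sup>2 / r\<^sup>2)))))
     \<and> (integral\<^sup>L P Y)\<^sup>2 \<le> tr \<and> tr - (integral\<^sup>L P Y)\<^sup>2 \<le> 3 * r\<^sup>2"
proof -
  interpret prob_space P by (rule P)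
  have symS: "mat_symmetric p S" using psdS unfolding pos_semidef_def by simp
  have symQ: "mat_symmetric p Q" using Qpd unfolding pos_def_def by simp
  have psdQ: "\<And>v. quad_form p Q v \<ge> 0" using Qpd by (rule psd_from_pd)
  define Q' where "Q' = (\<lambda>j k. Q j k / c)"
  have symQ': "mat_symmetric p Q'" using symQ unfolding Q'_def mat_symmetric_def by simp
  have qQ': "quad_form p Q' v = quad_form p Q v / c" for v
    unfolding Q'_def quad_form_def by (simp add: sum_divide_distrib)
  have psdQ': "\<And>v. quad_form p Q' v \<ge> 0" using psdQ cpos by (simp add: qQ')
  have MQ': "mat_mult p Q' Sig = (\<lambda>j k. mat_mult p Q Sig j k / c)"
    unfolding Q'_def mat_mult_def by (simp add: sum_divide_distrib)
  define \<rho> where "\<rho> = op_norm p (mat_mult p Q' Sig)"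
  have rdef: "r = sqrt \<rho>" using r_def MQ' \<rho>_def by simp
  have rho0: "\<rho> \<ge> 0" unfolding \<rho>_def by (rule op_norm_ge0)
  have r0: "r \<ge> 0" and r2: "r\<^sup>2 = \<rho>" using rdef rho0 by auto
  define g where "g x = sqrt (quad_form p Q (mat_vec p S x))" for x
  have Yg: "Y \<omega> = g (\<lambda>j. X j \<omega>)" for \<omega> using Y_def g_def by simp
  have qbound: "quad_form p Q (mat_vec p S z) \<le> c * \<rho> * (enorm p z)\<^sup>2" for z
  proof -
    have "quad_form p Q' (mat_vec p S z) \<le> \<rho> * (enorm p z)\<^sup>2"
      unfolding \<rho>_def by (rule quad_opnorm[OF symS symQ' Sig])
    then have "quad_form p Q (mat_vec p S z) / c \<le> \<rho> * (enorm p z)\<^sup>2" by (simp add: qQ')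
    then show ?thesis using cpos by (simp add: divide_le_eq mult_ac)
  qed
  have glip: "\<bar>g x - g y\<bar> \<le> sqrt c * r * enorm p (\<lambda>j. x j - y j)" for x y
  proof -
    have "\<bar>g x - g y\<bar> \<le> sqrt (quad_form p Q (\<lambda>j. mat_vec p S x j - mat_vec p S y j))"
      unfolding g_def by (rule hq_lip[OF symQ psdQ])
    also have "\<dots> = sqrt (quad_form p Q (mat_vec p S (\<lambda>j. x j - y j)))" by (simp add: mat_vec_diff)
    also have "\<dots> \<le> sqrt (c * \<rho> * (enorm p (\<lambda>j. x j - y j))\<^sup>2)" by (intro real_sqrt_le_mono qbound)
    also have "\<dots> = sqrt c * r * enorm p (\<lambda>j. x j - y j)"
      using cpos rho0 rdef enorm_ge0 by (simp add: real_sqrt_mult)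
    finally show ?thesis .
  qed
  have gconv: "g (\<lambda>j. u * x j + (1 - u) * y j) \<le> u * g x + (1 - u) * g y" if "0 \<le> u" "u \<le> 1" for u x y
    unfolding g_def mat_vec_lin using that by (intro hq_convex[OF symQ psdQ]) auto
  have Y0: "Y \<omega> \<ge> 0" for \<omega> unfolding Y_def using psdQ by simp
  have measY[measurable]: "Y \<in> borel_measurable P"
  proof -
    have "(\<lambda>\<omega>. quad_form p Q (mat_vec p S (\<lambda>j. X j \<omega>))) \<in> borel_measurable P"
      unfolding quad_form_def mat_vec_def
      by (intro borel_measurable_sum borel_measurable_times borel_measurable_const meas) auto
    then show ?thesis unfolding Y_def by (rule measurable_compose[OF _ borel_measurable_sqrt])
  qed
  define B where "B a b = (\<Sum>j<p. \<Sum>k<p. S j a * Q j k * S k b)" for a b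
  have Y2: "(Y \<omega>)\<^sup>2 = (\<Sum>a<p. \<Sum>b<p. X a \<omega> * X b \<omega> * B a b)" for \<omega>
  proof -
    have "(Y \<omega>)\<^sup>2 = quad_form p Q (mat_vec p S (\<lambda>j. X j \<omega>))" unfolding Y_def using psdQ by simp
    also have "\<dots> = (\<Sum>a<p. \<Sum>b<p. X a \<omega> * X b \<omega> * B a b)" unfolding B_def by (rule quad_expand_S)
    finally show ?thesis .
  qed
  have intXX: "integrable P (\<lambda>\<omega>. X a \<omega> * X b \<omega> * B a b)" if "a < p" "b < p" for a b
    using int2[OF that] by simp
  have introw: "integrable P (\<lambda>\<omega>. \<Sum>b<p. X a \<omega> * X b \<omega> * B a b)" if "a < p" for a
    by (rule Bochner_Integration.integrable_sum, rule intXX) (use that in auto)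
  have intY2: "integrable P (\<lambda>\<omega>. (Y \<omega>)\<^sup>2)"
    unfolding Y2 by (rule Bochner_Integration.integrable_sum, rule introw) auto
  have EY2: "integral\<^sup>L P (\<lambda>\<omega>. (Y \<omega>)\<^sup>2) = tr"
  proof -
    have "integral\<^sup>L P (\<lambda>\<omega>. (Y \<omega>)\<^sup>2) = (\<Sum>a<p. integral\<^sup>L P (\<lambda>\<omega>. \<Sum>b<p. X a \<omega> * X b \<omega> * B a b))"
      unfolding Y2 by (rule Bochner_Integration.integral_sum, rule introw) auto
    also have "\<dots> = (\<Sum>a<p. \<Sum>b<p. integral\<^sup>L P (\<lambda>\<omega>. X a \<omega> * X b \<omega> * B a b))"
      by (intro sum.cong refl, rule Bochner_Integration.integral_sum, rule intXX) auto
    also have "\<dots> = (\<Sum>a<p. \<Sum>b<p. (if a = b then B a b else 0))"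
      by (intro sum.cong refl) (simp add: cov)
    also have "\<dots> = (\<Sum>a<p. B a a)" by (intro sum.cong refl) (simp add: sum.delta sum.delta')
    also have "\<dots> = tr" unfolding B_def tr_def by (rule trace_expand[OF symS Sig])
    finally show ?thesis .
  qed
  have intY: "integrable P Y"
  proof (rule Bochner_Integration.integrable_bound[where f="\<lambda>\<omega>. 1 + (Y \<omega>)\<^sup>2"])
    show "integrable P (\<lambda>\<omega>. 1 + (Y \<omega>)\<^sup>2)" using intY2 by (intro Bochner_Integration.integrable_add integrable_const)
    show "Y \<in> borel_measurable P" by (rule measY)
    show "AE \<omega> in P. norm (Y \<omega>) \<le> norm (1 + (Y \<omega>)\<^sup>2)"
    proof (intro AE_I2)
      fix \<omega> have "\<bar>Y \<omega>\<bar> \<le> 1 + (Y \<omega>)\<^sup>2" by (rule abs_le_1_plus_sq)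
      then show "norm (Y \<omega>) \<le> norm (1 + (Y \<omega>)\<^sup>2)" by simp
    qed
  qed
  define \<mu> where "\<mu> = integral\<^sup>L P Y"
  have expa: "integral\<^sup>L P (\<lambda>\<omega>. (Y \<omega> - a)\<^sup>2) = tr - 2 * a * \<mu> + a\<^sup>2" for a
  proof -
    have eq: "(\<lambda>\<omega>. (Y \<omega> - a)\<^sup>2) = (\<lambda>\<omega>. ((Y \<omega>)\<^sup>2 - 2 * a * Y \<omega>) + a\<^sup>2)"
      by (simp add: power2_diff fun_eq_iff algebra_simps)
    have "integral\<^sup>L P (\<lambda>\<omega>. ((Y \<omega>)\<^sup>2 - 2 * a * Y \<omega>) + a\<^sup>2)
        = integral\<^sup>L P (\<lambda>\<omega>. (Y \<omega>)\<^sup>2 - 2 * a * Y \<omega>) + integral\<^sup>L P (\<lambda>\<omega>. a\<^sup>2)"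
      using intY2 intY by (intro Bochner_Integration.integral_add Bochner_Integration.integrable_diff Bochner_Integration.integrable_mult_right integrable_const)
    also have "integral\<^sup>L P (\<lambda>\<omega>. (Y \<omega>)\<^sup>2 - 2 * a * Y \<omega>) = integral\<^sup>L P (\<lambda>\<omega>. (Y \<omega>)\<^sup>2) - integral\<^sup>L P (\<lambda>\<omega>. 2 * a * Y \<omega>)"
      using intY2 intY by (intro Bochner_Integration.integral_diff Bochner_Integration.integrable_mult_right)
    also have "integral\<^sup>L P (\<lambda>\<omega>. 2 * a * Y \<omega>) = 2 * a * \<mu>" unfolding \<mu>_def by simp
    also have "integral\<^sup>L P (\<lambda>\<omega>. a\<^sup>2) = a\<^sup>2" by (simp add: prob_space)
    finally show ?thesis unfolding eq EY2 .
  qed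
  have var0: "0 \<le> integral\<^sup>L P (\<lambda>\<omega>. (Y \<omega> - \<mu>)\<^sup>2)" by (intro integral_nonneg_AE) auto
  then have mu_tr: "\<mu>\<^sup>2 \<le> tr" unfolding expa by (simp add: power2_eq_square)
  have main: "\<exists>m. integral\<^sup>L P (\<lambda>\<omega>. (Y \<omega> - m)\<^sup>2) \<le> 3 * r\<^sup>2
      \<and> (r > 0 \<longrightarrow> (\<forall>s>0. measure P {\<omega>\<in>space P. \<bar>Y \<omega> - m\<bar> > s} \<le> 2 * exp (- (s\<^sup>2 / r\<^sup>2))))"
  proof (cases "r = 0")
    case True
    then have rz: "\<rho> = 0" using r2 by simp
    have Yz: "Y \<omega> = 0" for \<omega>
    proof -
      have "quad_form p Q (mat_vec p S (\<lambda>j. X j \<omega>)) \<le> 0" using qbound[of "\<lambda>j. X j \<omega>"] rz by simp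
      then have "quad_form p Q (mat_vec p S (\<lambda>j. X j \<omega>)) = 0" using psdQ by (simp add: order_antisym)
      then show ?thesis unfolding Y_def by simp
    qed
    then show ?thesis using True by (intro exI[of _ 0]) simp
  next
    case False
    then have rp: "r > 0" using r0 by simp
    define a where "a = sqrt c * r"
    have ap: "a > 0" using cpos rp unfolding a_def by simp
    define f where "f x = g x / a" for x
    have cl: "convex_lip1 p f"
      unfolding convex_lip1_def
    proof (intro conjI allI impI)
      fix x y
      have "\<bar>f x - f y\<bar> = \<bar>g x - g y\<bar> / a" unfolding f_def using ap by (simp add: diff_divide_distrib[symmetric])
      also have "\<dots> \<le> enorm p (\<lambda>j. x j - y j)" using glip[of x y] ap unfolding a_def by (simp add: divide_le_eq mult_ac)
      finally show "\<bar>f x - f y\<bar> \<le> enorm p (\<lambda>j. x j - y j)" .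
    next
      fix x y :: "nat \<Rightarrow> real" and u :: real assume "0 \<le> u \<and> u \<le> 1"
      then have "g (\<lambda>j. u * x j + (1 - u) * y j) / a \<le> (u * g x + (1 - u) * g y) / a"
        using gconv[of u x y] ap by (intro divide_right_mono) auto
      then show "f (\<lambda>j. u * x j + (1 - u) * y j) \<le> u * f x + (1 - u) * f y"
        unfolding f_def by (simp add: add_divide_distrib)
    qed
    obtain m where med: "is_median P Y m" using median_exists[OF P measY] by blast
    have fY: "f (\<lambda>j. X j \<omega>) = Y \<omega> / a" for \<omega> unfolding f_def Yg ..
    have medf: "is_median P (\<lambda>\<omega>. f (\<lambda>j. X j \<omega>)) (m / a)"
      using med ap unfolding is_median_def fY by (simp add: divide_le_cancel)
    have tail: "measure P {\<omega>\<in>space P. \<bar>Y \<omega> - m\<bar> > s} \<le> 2 * exp (- (s\<^sup>2 / r\<^sup>2))" if s: "s > 0" for s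
    proof -
      have "{\<omega>\<in>space P. \<bar>Y \<omega> - m\<bar> > s} = {\<omega>\<in>space P. \<bar>f (\<lambda>j. X j \<omega>) - m / a\<bar> > s / a}"
      proof -
        have "\<bar>Y \<omega> / a - m / a\<bar> = \<bar>Y \<omega> - m\<bar> / a" for \<omega> using ap by (simp add: diff_divide_distrib[symmetric])
        then show ?thesis unfolding fY using ap by (simp add: divide_less_cancel)
      qed
      also have "measure P \<dots> \<le> 2 * exp (- c * (s / a)\<^sup>2)" using conc[OF cl medf] s ap by simp
      also have "- c * (s / a)\<^sup>2 = - (s\<^sup>2 / r\<^sup>2)"
        using cpos rp unfolding a_def by (simp add: power_divide power_mult_distrib)
      finally show ?thesis .
    qed
    have int_sq: "integrable P (\<lambda>\<omega>. (\<bar>Y \<omega> - m\<bar>)\<^sup>2)"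
    proof -
      have "(\<lambda>\<omega>. (\<bar>Y \<omega> - m\<bar>)\<^sup>2) = (\<lambda>\<omega>. ((Y \<omega>)\<^sup>2 - 2 * m * Y \<omega>) + m\<^sup>2)"
        by (simp add: power2_diff fun_eq_iff algebra_simps)
      then show ?thesis using intY2 intY
        by (simp only:) (intro Bochner_Integration.integrable_add Bochner_Integration.integrable_diff Bochner_Integration.integrable_mult_right integrable_const)
    qed
    have "integral\<^sup>L P (\<lambda>\<omega>. (\<bar>Y \<omega> - m\<bar>)\<^sup>2) \<le> 3 * r\<^sup>2"
      by (rule tail_sq[OF P _ _ rp _ int_sq]) (auto intro: tail)
    then show ?thesis using tail rp by (intro exI[of _ m]) simp
  qed
  then obtain m where m1: "integral\<^sup>L P (\<lambda>\<omega>. (Y \<omega> - m)\<^sup>2) \<le> 3 * r\<^sup>2"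
    and m2: "r > 0 \<longrightarrow> (\<forall>s>0. measure P {\<omega>\<in>space P. \<bar>Y \<omega> - m\<bar> > s} \<le> 2 * exp (- (s\<^sup>2 / r\<^sup>2)))"
    by blast
  have dm: "(\<mu> - m)\<^sup>2 + (tr - \<mu>\<^sup>2) \<le> 3 * r\<^sup>2" using m1 unfolding expa by (simp add: power2_diff algebra_simps)
  have d1: "(\<mu> - m)\<^sup>2 \<le> (2 * r)\<^sup>2"
  proof -
    have "(2 * r)\<^sup>2 = 4 * r\<^sup>2" by (simp add: power_mult_distrib)
    then show ?thesis using dm mu_tr zero_le_power2[of r] by linarith
  qed
  have "\<bar>\<mu> - m\<bar>\<^sup>2 \<le> (2 * r)\<^sup>2" using d1 by simp
  then have d2: "\<bar>\<mu> - m\<bar> \<le> 2 * r" by (rule power2_le_imp_le) (simp add: r0)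
  have d3: "tr - \<mu>\<^sup>2 \<le> 3 * r\<^sup>2" using dm zero_le_power2[of "\<mu> - m"] by linarith
  have rz: "r = 0 \<longrightarrow> (\<forall>\<omega>. Y \<omega> = 0)"
  proof
    assume "r = 0"
    then have rz: "\<rho> = 0" using r2 by simp
    show "\<forall>\<omega>. Y \<omega> = 0"
    proof
      fix \<omega>
      have "quad_form p Q (mat_vec p S (\<lambda>j. X j \<omega>)) \<le> 0" using qbound[of "\<lambda>j. X j \<omega>"] rz by simp
      then have "quad_form p Q (mat_vec p S (\<lambda>j. X j \<omega>)) = 0" using psdQ by (simp add: order_antisym)
      then show "Y \<omega> = 0" unfolding Y_def by simp
    qed
  qed
  show ?thesis using measY intY r0 rz d2 m2 mu_tr d3 unfolding \<mu>_def by blast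
qed

lemma max_abs_gt:
  fixes f :: "'b \<Rightarrow> real"
  assumes "finite A" "A \<noteq> {}" "\<bar>Max (f ` A)\<bar> > t" "\<And>a. a \<in> A \<Longrightarrow> f a \<ge> 0"
  shows "\<exists>a\<in>A. f a > t"
proof -
  obtain a0 where a0: "a0 \<in> A" using assms(2) by blast
  have "Max (f ` A) \<ge> f a0" using assms(1) a0 by (intro Max_ge) auto
  then have "Max (f ` A) \<ge> 0" using assms(4)[OF a0] by linarith
  then have "Max (f ` A) > t" using assms(3) by simp
  then show ?thesis using assms(1,2) by (simp add: Max_gr_iff)
qed

lemma measure_le_sets:
  assumes "finite_measure M" "A \<subseteq> B" "B \<in> sets M"
  shows "measure M A \<le> measure M B"
proof (cases "A \<in> sets M")
  case True then show ?thesis using assms by (intro finite_measure.finite_measure_mono) auto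
next
  case False then show ?thesis by (simp add: measure_notin_sets)
qed

lemma max_sub:
  fixes f :: "'b \<Rightarrow> real"
  shows "\<bar>Max (f ` A)\<bar> > t \<Longrightarrow> finite A \<Longrightarrow> A \<noteq> {} \<Longrightarrow> (\<And>a. a \<in> A \<Longrightarrow> f a \<ge> 0)
    \<Longrightarrow> (\<And>a. a \<in> A \<Longrightarrow> f a > t \<Longrightarrow> P) \<Longrightarrow> P"
  using max_abs_gt[of A t f] by blast

lemma bigO_from_U:
  assumes prob: "\<And>n. prob_space (M n)"
    and U_sets: "\<And>n. U n \<in> sets (M n)"
    and small: "\<And>\<delta>. \<delta> > 0 \<Longrightarrow> \<forall>\<^sub>F n in sequentially. measure (M n) (U n) < \<delta>"
    and sub: "\<forall>\<^sub>F n in sequentially. \<forall>\<omega>\<in>space (M n). \<bar>Y n \<omega>\<bar> > K * a n \<longrightarrow> \<omega> \<in> U n"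
  shows "bigO_P M Y a"
  unfolding bigO_P_def
proof (intro allI impI exI[of _ K])
  fix \<delta> :: real assume d: "\<delta> > 0"
  show "\<forall>\<^sub>F n in sequentially. measure (M n) {\<omega> \<in> space (M n). K * a n < \<bar>Y n \<omega>\<bar>} < \<delta>"
    using small[OF d] sub
  proof eventually_elim
    case (elim n)
    have "{\<omega> \<in> space (M n). K * a n < \<bar>Y n \<omega>\<bar>} \<subseteq> U n" using elim(2) by auto
    then have "measure (M n) {\<omega> \<in> space (M n). K * a n < \<bar>Y n \<omega>\<bar>} \<le> measure (M n) (U n)"
      by (rule measure_le_sets[OF prob_space.finite_measure[OF prob] _ U_sets])
    then show ?case using elim(1) by linarith
  qed
qed

lemma alg2:
  fixes d \<mu> tr \<epsilon> T :: real
  assumes d: "\<bar>d\<bar> \<le> 4 * \<epsilon>" and e0: "\<epsilon> \<ge> 0" and e1: "\<epsilon> \<le> 1" and T1: "T \<ge> 1"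
    and mu: "\<bar>\<mu>\<bar> \<le> T" and v0: "0 \<le> tr - \<mu>\<^sup>2" and v1: "tr - \<mu>\<^sup>2 \<le> 3 * \<epsilon>\<^sup>2"
  shows "\<bar>(\<mu> + d)\<^sup>2 - tr\<bar> \<le> 27 * \<epsilon> * T"
proof -
  have eq: "(\<mu> + d)\<^sup>2 - tr = d\<^sup>2 + 2 * \<mu> * d - (tr - \<mu>\<^sup>2)" by (simp add: power2_eq_square algebra_simps)
  have "\<bar>(\<mu> + d)\<^sup>2 - tr\<bar> \<le> d\<^sup>2 + 2 * (\<bar>\<mu>\<bar> * \<bar>d\<bar>) + (tr - \<mu>\<^sup>2)"
  proof -
    have a2: "\<bar>2 * \<mu> * d\<bar> = 2 * (\<bar>\<mu>\<bar> * \<bar>d\<bar>)" by (simp add: abs_mult)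
    have a3: "- \<bar>2 * \<mu> * d\<bar> \<le> 2 * \<mu> * d" "2 * \<mu> * d \<le> \<bar>2 * \<mu> * d\<bar>" by simp_all
    have a4: "0 \<le> d\<^sup>2" by simp
    show ?thesis unfolding eq abs_le_iff using a2 a3 a4 v0 by linarith
  qed
  moreover have B1: "d\<^sup>2 \<le> 16 * (\<epsilon> * \<epsilon>)"
  proof -
    have "\<bar>d\<bar>\<^sup>2 \<le> (4 * \<epsilon>)\<^sup>2" by (rule power_mono[OF d abs_ge_zero])
    then show ?thesis by (simp add: power2_eq_square)
  qed
  moreover have B2: "\<bar>\<mu>\<bar> * \<bar>d\<bar> \<le> 4 * (\<epsilon> * T)"
  proof -
    have "\<bar>\<mu>\<bar> * \<bar>d\<bar> \<le> T * (4 * \<epsilon>)" using mu d by (intro mult_mono) auto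
    then show ?thesis by (simp add: mult_ac)
  qed
  moreover have B3: "tr - \<mu>\<^sup>2 \<le> 3 * (\<epsilon> * \<epsilon>)" using v1 by (simp add: power2_eq_square)
  moreover have B4: "\<epsilon> * \<epsilon> \<le> \<epsilon> * T" using e0 e1 T1 by (intro mult_left_mono) auto
  moreover have "27 * \<epsilon> * T = 27 * (\<epsilon> * T)" by simp
  ultimately show ?thesis by linarith
qed

theorem mainTheorem9:
  fixes M :: "nat \<Rightarrow> 'a measure"
    and p :: "nat \<Rightarrow> nat"
    and X Z :: "nat \<Rightarrow> nat \<Rightarrow> nat \<Rightarrow> 'a \<Rightarrow> real"
    and Sigma SigmaHalf Q :: "nat \<Rightarrow> nat \<Rightarrow> nat \<Rightarrow> nat \<Rightarrow> real"
    and c :: "nat \<Rightarrow> nat \<Rightarrow> real"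
  assumes prob: "\<And>n. prob_space (M n)"
    and meas: "\<And>n i j. i < n \<Longrightarrow> j < p n \<Longrightarrow> X n i j \<in> borel_measurable (M n)"
    and int1: "\<And>n i j. i < n \<Longrightarrow> j < p n \<Longrightarrow> integrable (M n) (X n i j)"
    and mean0: "\<And>n i j. i < n \<Longrightarrow> j < p n \<Longrightarrow> integral\<^sup>L (M n) (X n i j) = 0"
    and int2: "\<And>n i j k. i < n \<Longrightarrow> j < p n \<Longrightarrow> k < p n \<Longrightarrow>
                 integrable (M n) (\<lambda>\<omega>. X n i j \<omega> * X n i k \<omega>)"
    and cov: "\<And>n i j k. i < n \<Longrightarrow> j < p n \<Longrightarrow> k < p n \<Longrightarrow>
                 integral\<^sup>L (M n) (\<lambda>\<omega>. X n i j \<omega> * X n i k \<omega>) = (if j = k then 1 else 0)"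
    and sqrt_psd: "\<And>n i. i < n \<Longrightarrow> pos_semidef (p n) (SigmaHalf n i)"
    and sqrt_eq: "\<And>n i. i < n \<Longrightarrow> \<forall>j<p n. \<forall>k<p n.
                 Sigma n i j k = mat_mult (p n) (SigmaHalf n i) (SigmaHalf n i) j k"
    and Zdef: "\<And>n i j \<omega>. i < n \<Longrightarrow> j < p n \<Longrightarrow> \<omega> \<in> space (M n) \<Longrightarrow>
                 Z n i j \<omega> = mat_vec (p n) (SigmaHalf n i) (\<lambda>k. X n i k \<omega>) j"
    and cpos: "\<And>n i. i < n \<Longrightarrow> c n i > 0"
    and conc: "\<And>n i f m t. i < n \<Longrightarrow> convex_lip1 (p n) f \<Longrightarrow>
                 is_median (M n) (\<lambda>\<omega>. f (\<lambda>j. X n i j \<omega>)) m \<Longrightarrow> t > 0 \<Longrightarrow>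
                 measure (M n) {\<omega>\<in>space (M n). \<bar>f (\<lambda>j. X n i j \<omega>) - m\<bar> > t}
                   \<le> 2 * exp (- c n i * t\<^sup>2)"
    and Qpd: "\<And>n i. i < n \<Longrightarrow> pos_def (p n) (Q n i)"
  shows "bigO_P M
           (\<lambda>n \<omega>. Max ((\<lambda>i. \<bar>sqrt (quad_form (p n) (Q n i) (\<lambda>j. Z n i j \<omega>))
                   - integral\<^sup>L (M n) (\<lambda>\<omega>'. sqrt (quad_form (p n) (Q n i) (\<lambda>j. Z n i j \<omega>')))\<bar>) ` {..<n}))
           (\<lambda>n. Max ((\<lambda>i. sqrt (op_norm (p n) (\<lambda>j k. mat_mult (p n) (Q n i) (Sigma n i) j k / c n i))) ` {..<n})
                * sqrt (ln (real n)))
       \<and> (((\<lambda>n. Max ((\<lambda>i. sqrt (op_norm (p n) (\<lambda>j k. mat_mult (p n) (Q n i) (Sigma n i) j k / c n i))) ` {..<n})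
                * sqrt (ln (real n))) \<longlonglongrightarrow> 0)
          \<longrightarrow> bigO_P M
           (\<lambda>n \<omega>. Max ((\<lambda>i. \<bar>quad_form (p n) (Q n i) (\<lambda>j. Z n i j \<omega>)
                   - mat_trace (p n) (mat_mult (p n) (Sigma n i) (Q n i))\<bar>) ` {..<n}))
           (\<lambda>n. Max ((\<lambda>i. sqrt (op_norm (p n) (\<lambda>j k. mat_mult (p n) (Q n i) (Sigma n i) j k / c n i))) ` {..<n})
                * sqrt (ln (real n))
                * max (Max ((\<lambda>i. sqrt (mat_trace (p n) (mat_mult (p n) (Sigma n i) (Q n i)))) ` {..<n})) 1))"
proof -
  define V where "V = (\<lambda>n i \<omega>. sqrt (quad_form (p n) (Q n i) (mat_vec (p n) (SigmaHalf n i) (\<lambda>j. X n i j \<omega>))))"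
  define rr where "rr = (\<lambda>n i. sqrt (op_norm (p n) (\<lambda>j k. mat_mult (p n) (Q n i) (Sigma n i) j k / c n i)))"
  define tr where "tr = (\<lambda>n i. mat_trace (p n) (mat_mult (p n) (Sigma n i) (Q n i)))"
  define mu where "mu = (\<lambda>n i. integral\<^sup>L (M n) (\<lambda>\<omega>'. sqrt (quad_form (p n) (Q n i) (\<lambda>j. Z n i j \<omega>'))))"
  define R where "R = (\<lambda>n. Max (rr n ` {..<n}))"
  define L where "L = (\<lambda>n. sqrt (ln (real n)))"
  define Tm where "Tm = (\<lambda>n. max (Max ((\<lambda>i. sqrt (tr n i)) ` {..<n})) 1)"
  define E where "E = (\<lambda>n i. {\<omega>\<in>space (M n). \<bar>V n i \<omega> - mu n i\<bar> > 4 * R n * L n})"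
  define U where "U = (\<lambda>n. \<Union>i<n. E n i)"
  have ZV: "quad_form (p n) (Q n i) (\<lambda>j. Z n i j \<omega>) = (V n i \<omega>)\<^sup>2"
    if "i < n" "\<omega> \<in> space (M n)" for n i \<omega>
  proof -
    have "quad_form (p n) (Q n i) (\<lambda>j. Z n i j \<omega>) = quad_form (p n) (Q n i) (mat_vec (p n) (SigmaHalf n i) (\<lambda>j. X n i j \<omega>))"
      using Zdef[OF that(1) _ that(2)] by (intro quad_form_cong) simp
    then show ?thesis unfolding V_def using psd_from_pd[OF Qpd[OF that(1)]] by simp
  qed
  have ZV': "sqrt (quad_form (p n) (Q n i) (\<lambda>j. Z n i j \<omega>)) = V n i \<omega>"
    if "i < n" "\<omega> \<in> space (M n)" for n i \<omega>
    using ZV[OF that] unfolding V_def using psd_from_pd[OF Qpd[OF that(1)]] by simp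
  have S: "V n i \<in> borel_measurable (M n) \<and> integrable (M n) (V n i) \<and> rr n i \<ge> 0
     \<and> (rr n i = 0 \<longrightarrow> (\<forall>\<omega>. V n i \<omega> = 0))
     \<and> (\<exists>m. \<bar>integral\<^sup>L (M n) (V n i) - m\<bar> \<le> 2 * rr n i
          \<and> (rr n i > 0 \<longrightarrow> (\<forall>s>0. measure (M n) {\<omega>\<in>space (M n). \<bar>V n i \<omega> - m\<bar> > s} \<le> 2 * exp (- (s\<^sup>2 / (rr n i)\<^sup>2)))))
     \<and> (integral\<^sup>L (M n) (V n i))\<^sup>2 \<le> tr n i \<and> tr n i - (integral\<^sup>L (M n) (V n i))\<^sup>2 \<le> 3 * (rr n i)\<^sup>2"
    if i: "i < n" for n i
    by (rule single[OF prob meas[OF i] int2[OF i] cov[OF i] sqrt_psd[OF i] sqrt_eq[OF i] cpos[OF i]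
          conc[OF i] Qpd[OF i]]) (simp_all add: V_def rr_def tr_def)
  have mu_eq: "mu n i = integral\<^sup>L (M n) (V n i)" if "i < n" for n i
    unfolding mu_def using ZV'[OF that] by (intro Bochner_Integration.integral_cong) auto
  have rr_le: "rr n i \<le> R n" if "i < n" for n i unfolding R_def using that by (intro Max_ge) auto
  have ln1: "1 \<le> ln (real n)" if "n \<ge> 3" for n
  proof -
    have "exp 1 \<le> real n" using e_less_272 that by linarith
    then show ?thesis using that by (subst ln_ge_iff) auto
  qed
  have L1: "L n \<ge> 1" if "n \<ge> 3" for n unfolding L_def using ln1[OF that] by simp
  have R0: "R n \<ge> 0" if "n \<ge> 3" for n
    using rr_le[of 0 n] S[of 0 n] that by linarith
  have E_sets: "E n i \<in> sets (M n)" if "i < n" for n i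
  proof -
    have [measurable]: "V n i \<in> borel_measurable (M n)" using S[OF that] by blast
    show ?thesis unfolding E_def by measurable
  qed
  have U_sets: "U n \<in> sets (M n)" for n unfolding U_def using E_sets by auto
  have E_bound: "measure (M n) (E n i) \<le> 2 / real n ^ 4" if i: "i < n" and n3: "n \<ge> 3" for n i
  proof (cases "rr n i = 0")
    case True
    then have V0: "V n i \<omega> = 0" for \<omega> using S[OF i] by blast
    then have Vz: "V n i = (\<lambda>_. 0)" by (simp add: fun_eq_iff)
    have "mu n i = 0" unfolding mu_eq[OF i] Vz by simp
    moreover have "0 \<le> 4 * R n * L n" using R0[OF n3] L1[OF n3] by simp
    ultimately have "E n i = {}" unfolding E_def using V0 by auto
    then show ?thesis by simp
  next
    case False
    then have rp: "rr n i > 0" using S[OF i] by auto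
    obtain m where m1: "\<bar>mu n i - m\<bar> \<le> 2 * rr n i"
      and tail: "\<And>s. s > 0 \<Longrightarrow> measure (M n) {\<omega>\<in>space (M n). \<bar>V n i \<omega> - m\<bar> > s} \<le> 2 * exp (- (s\<^sup>2 / (rr n i)\<^sup>2))"
      using S[OF i] rp unfolding mu_eq[OF i] by blast
    define s where "s = 2 * rr n i * L n"
    have s0: "s > 0" unfolding s_def using rp L1[OF n3] by simp
    have sub: "E n i \<subseteq> {\<omega>\<in>space (M n). \<bar>V n i \<omega> - m\<bar> > s}"
    proof
      fix \<omega> assume "\<omega> \<in> E n i"
      then have w: "\<omega> \<in> space (M n)" and gt: "\<bar>V n i \<omega> - mu n i\<bar> > 4 * R n * L n" unfolding E_def by auto
      have "4 * rr n i * L n \<le> 4 * R n * L n" using rr_le[OF i] L1[OF n3] by (intro mult_right_mono) auto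
      moreover have "rr n i \<le> rr n i * L n" using rp L1[OF n3] by simp
      ultimately have "\<bar>V n i \<omega> - m\<bar> > s" using gt m1 unfolding s_def by linarith
      then show "\<omega> \<in> {\<omega>\<in>space (M n). \<bar>V n i \<omega> - m\<bar> > s}" using w by simp
    qed
    have "measure (M n) (E n i) \<le> measure (M n) {\<omega>\<in>space (M n). \<bar>V n i \<omega> - m\<bar> > s}"
    proof -
      have mV[measurable]: "V n i \<in> borel_measurable (M n)" using S[OF i] by blast
      show ?thesis by (rule measure_le_sets[OF prob_space.finite_measure[OF prob] sub]) measurable
    qed
    also have "\<dots> \<le> 2 * exp (- (s\<^sup>2 / (rr n i)\<^sup>2))" by (rule tail[OF s0])
    also have "s\<^sup>2 / (rr n i)\<^sup>2 = 4 * ln (real n)"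
      unfolding s_def L_def using rp ln1[OF n3] by (simp add: power_mult_distrib)
    also have "exp (- (4 * ln (real n))) = 1 / real n ^ 4"
    proof -
      have "exp (real 4 * ln (real n)) = exp (ln (real n)) ^ 4" by (rule exp_of_nat_mult)
      also have "\<dots> = real n ^ 4" using n3 by simp
      finally show ?thesis by (simp add: exp_minus inverse_eq_divide)
    qed
    finally show ?thesis by simp
  qed
  have U_bound: "measure (M n) (U n) \<le> 2 / real n ^ 3" if n3: "n \<ge> 3" for n
  proof -
    have "measure (M n) (U n) \<le> (\<Sum>i<n. measure (M n) (E n i))"
      unfolding U_def by (rule measure_UNION_le) (auto intro: E_sets)
    also have "\<dots> \<le> (\<Sum>i<n. 2 / real n ^ 4)" by (intro sum_mono E_bound n3) auto
    also have "\<dots> = 2 / real n ^ 3" using n3 by (simp add: power_eq_if)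
    finally show ?thesis .
  qed
  have U_small: "\<forall>\<^sub>F n in sequentially. measure (M n) (U n) < \<delta>" if d: "\<delta> > 0" for \<delta>
  proof -
    obtain N :: nat where N: "2 / \<delta> < real N" using reals_Archimedean2 by blast
    have "measure (M n) (U n) < \<delta>" if n: "n \<ge> max 3 N" for n
    proof -
      have n3: "n \<ge> 3" and nN: "real n \<ge> real N" using n by auto
      have npos: "real n \<ge> 1" using n3 by simp
      have "measure (M n) (U n) \<le> 2 / real n ^ 3" by (rule U_bound[OF n3])
      also have "\<dots> \<le> 2 / real n"
      proof -
        have "real n \<le> real n ^ 3" using npos by (simp add: power_increasing[of 1 3, simplified] self_le_power)
        then show ?thesis using npos by (intro divide_left_mono) auto
      qed
      also have "\<dots> < \<delta>"
      proof -
        have "2 / \<delta> < real n" using N nN by linarith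
        then have "2 < real n * \<delta>" using d by (simp add: divide_less_eq)
        then show ?thesis using npos by (simp add: divide_less_eq mult.commute)
      qed
      finally show ?thesis .
    qed
    then show ?thesis unfolding eventually_sequentially by blast
  qed
  have ev3: "\<forall>\<^sub>F n in sequentially. n \<ge> 3" by (rule eventually_ge_at_top)
  have K1: "\<omega> \<in> U n" if n3: "n \<ge> 3" and i: "i < n" and w: "\<omega> \<in> space (M n)"
    and gt: "\<bar>sqrt (quad_form (p n) (Q n i) (\<lambda>j. Z n i j \<omega>)) - mu n i\<bar> > 4 * (R n * L n)" for n i \<omega>
  proof -
    have "\<bar>V n i \<omega> - mu n i\<bar> > 4 * R n * L n" using gt ZV'[OF i w] by (simp add: mult.assoc)
    then show ?thesis unfolding U_def E_def using i w by auto
  qed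
  have K2: "\<omega> \<in> U n" if n3: "n \<ge> 3" and e1: "R n * L n \<le> 1" and i: "i < n" and w: "\<omega> \<in> space (M n)"
    and gt: "\<bar>quad_form (p n) (Q n i) (\<lambda>j. Z n i j \<omega>) - tr n i\<bar> > 27 * (R n * L n * Tm n)" for n i \<omega>
  proof (rule ccontr)
    assume "\<omega> \<notin> U n"
    then have "\<omega> \<notin> E n i" unfolding U_def using i by auto
    then have dle: "\<bar>V n i \<omega> - mu n i\<bar> \<le> 4 * (R n * L n)" unfolding E_def using w by (auto simp: mult.assoc)
    define \<epsilon> where "\<epsilon> = R n * L n"
    have e0: "\<epsilon> \<ge> 0" unfolding \<epsilon>_def using R0[OF n3] L1[OF n3] by simp
    have T1: "Tm n \<ge> 1" unfolding Tm_def by simp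
    have Si: "(mu n i)\<^sup>2 \<le> tr n i" "tr n i - (mu n i)\<^sup>2 \<le> 3 * (rr n i)\<^sup>2" "rr n i \<ge> 0"
      using S[OF i] unfolding mu_eq[OF i] by blast+
    have "\<bar>mu n i\<bar> \<le> sqrt (tr n i)" using Si(1) real_sqrt_le_mono[OF Si(1)] by simp
    also have "sqrt (tr n i) \<le> Max ((\<lambda>i. sqrt (tr n i)) ` {..<n})" using i by (intro Max_ge) auto
    also have "\<dots> \<le> Tm n" unfolding Tm_def by simp
    finally have muT: "\<bar>mu n i\<bar> \<le> Tm n" .
    have "(rr n i)\<^sup>2 \<le> (R n)\<^sup>2" using rr_le[OF i] Si(3) by (intro power_mono) auto
    also have "\<dots> \<le> (R n)\<^sup>2 * ln (real n)" using mult_left_mono[OF ln1[OF n3], of "(R n)\<^sup>2"] by simp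
    also have "\<dots> = \<epsilon>\<^sup>2" unfolding \<epsilon>_def L_def using ln1[OF n3] by (simp add: power_mult_distrib)
    finally have rre: "(rr n i)\<^sup>2 \<le> \<epsilon>\<^sup>2" .
    have "\<bar>(mu n i + (V n i \<omega> - mu n i))\<^sup>2 - tr n i\<bar> \<le> 27 * \<epsilon> * Tm n"
    proof (rule alg2)
      show "\<bar>V n i \<omega> - mu n i\<bar> \<le> 4 * \<epsilon>" using dle unfolding \<epsilon>_def .
      show "\<epsilon> \<le> 1" using e1 unfolding \<epsilon>_def .
      show "0 \<le> tr n i - (mu n i)\<^sup>2" using Si(1) by simp
      show "tr n i - (mu n i)\<^sup>2 \<le> 3 * \<epsilon>\<^sup>2" using Si(2) rre by linarith
    qed (use e0 T1 muT in auto)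
    then have "\<bar>quad_form (p n) (Q n i) (\<lambda>j. Z n i j \<omega>) - tr n i\<bar> \<le> 27 * (R n * L n * Tm n)"
      using ZV[OF i w] unfolding \<epsilon>_def by (simp add: mult.assoc)
    then show False using gt by simp
  qed
  note K1' = K1[unfolded mu_def R_def rr_def L_def]
  note K2' = K2[unfolded mu_def R_def rr_def L_def tr_def Tm_def]
  have part1: "bigO_P M
           (\<lambda>n \<omega>. Max ((\<lambda>i. \<bar>sqrt (quad_form (p n) (Q n i) (\<lambda>j. Z n i j \<omega>))
                   - integral\<^sup>L (M n) (\<lambda>\<omega>'. sqrt (quad_form (p n) (Q n i) (\<lambda>j. Z n i j \<omega>')))\<bar>) ` {..<n}))
           (\<lambda>n. Max ((\<lambda>i. sqrt (op_norm (p n) (\<lambda>j k. mat_mult (p n) (Q n i) (Sigma n i) j k / c n i))) ` {..<n})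
                * sqrt (ln (real n)))"
    apply (rule bigO_from_U[where K=4, OF prob U_sets U_small], assumption)
    apply (rule eventually_mono[OF ev3])
    apply (intro ballI impI)
    apply (erule max_sub)
       apply simp
      apply (simp add: lessThan_empty_iff)
     apply simp
    apply (erule K1')
      apply simp_all
    done
  have part2: "((\<lambda>n. Max ((\<lambda>i. sqrt (op_norm (p n) (\<lambda>j k. mat_mult (p n) (Q n i) (Sigma n i) j k / c n i))) ` {..<n})
                * sqrt (ln (real n))) \<longlonglongrightarrow> 0)
          \<longrightarrow> bigO_P M
           (\<lambda>n \<omega>. Max ((\<lambda>i. \<bar>quad_form (p n) (Q n i) (\<lambda>j. Z n i j \<omega>)
                   - mat_trace (p n) (mat_mult (p n) (Sigma n i) (Q n i))\<bar>) ` {..<n}))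
           (\<lambda>n. Max ((\<lambda>i. sqrt (op_norm (p n) (\<lambda>j k. mat_mult (p n) (Q n i) (Sigma n i) j k / c n i))) ` {..<n})
                * sqrt (ln (real n))
                * max (Max ((\<lambda>i. sqrt (mat_trace (p n) (mat_mult (p n) (Sigma n i) (Q n i)))) ` {..<n})) 1)"
  proof
    assume tends: "(\<lambda>n. Max ((\<lambda>i. sqrt (op_norm (p n) (\<lambda>j k. mat_mult (p n) (Q n i) (Sigma n i) j k / c n i))) ` {..<n})
                * sqrt (ln (real n))) \<longlonglongrightarrow> 0"
    have ev1: "\<forall>\<^sub>F n in sequentially. Max ((\<lambda>i. sqrt (op_norm (p n) (\<lambda>j k. mat_mult (p n) (Q n i) (Sigma n i) j k / c n i))) ` {..<n})
                * sqrt (ln (real n)) < 1"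
      using order_tendstoD(2)[OF tends, of 1] by simp
    have ev: "\<forall>\<^sub>F n in sequentially. n \<ge> 3 \<and> Max ((\<lambda>i. sqrt (op_norm (p n) (\<lambda>j k. mat_mult (p n) (Q n i) (Sigma n i) j k / c n i))) ` {..<n})
                * sqrt (ln (real n)) \<le> 1"
      using ev1 ev3 by eventually_elim simp
    show "bigO_P M
           (\<lambda>n \<omega>. Max ((\<lambda>i. \<bar>quad_form (p n) (Q n i) (\<lambda>j. Z n i j \<omega>)
                   - mat_trace (p n) (mat_mult (p n) (Sigma n i) (Q n i))\<bar>) ` {..<n}))
           (\<lambda>n. Max ((\<lambda>i. sqrt (op_norm (p n) (\<lambda>j k. mat_mult (p n) (Q n i) (Sigma n i) j k / c n i))) ` {..<n})
                * sqrt (ln (real n))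
                * max (Max ((\<lambda>i. sqrt (mat_trace (p n) (mat_mult (p n) (Sigma n i) (Q n i)))) ` {..<n})) 1)"
      apply (rule bigO_from_U[where K=27, OF prob U_sets U_small], assumption)
      apply (rule eventually_mono[OF ev])
      apply (intro ballI impI)
      apply (erule max_sub)
         apply simp
        apply (simp add: lessThan_empty_iff)
       apply simp
      apply (erule conjE)
      apply (erule K2')
         apply assumption
        apply simp
       apply assumption
      apply assumption
      done
  qed
  from part1 part2 show ?thesis by (rule conjI)
qed

end
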